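(* Consider an open quantum system on a finite-dimensional Hilbert space $\mathcal H$ with Hamiltonian $H$ and coupling operators $L_1,\dots,L_K$. Let $W_1,\dots,W_N$ be observables on $\mathcal H$ commuting with $H$, each positive semidefinite with smallest eigenvalue $0$, and let $W=\sum_{\lambda=1}^NW_\lambda$. If Condition ES holds for each $W_\lambda$ (respectively, Condition DS holds for each $W_\lambda$), then for every initial density state the system converges asymptotically to the set of ground states of $W$. In addition, $W$ is a Lyapunov operator.
   Context: The density state (positive semidefinite, trace one) evolves by $\dot\rho_t=-i[H,\rho_t]+\sum_{k=1}^K\big(L_k\rho_tL_k^\dagger-\tfrac12L_k^\dagger L_k\rho_t-\tfrac12\rho_tL_k^\dagger L_k\big)$. For an observable $X$ commuting with $H$ the generator is $\mathcal G(X)=\sum_{k=1}^K\big(L_k^\dagger XL_k-\tfrac12L_k^\dagger L_kX-\tfrac12XL_k^\dagger L_k\big)$, and $\frac{d}{dt}\operatorname{tr}(X\rho_t)=\operatorname{tr}(\mathcal G(X)\rho_t)$. Dissipation functional: $\mathfrak D(X)=\mathcal G(X^\dagger X)-\mathcal G(X^\dagger)X-X^\dagger\mathcal G(X)$. Condition ES for $X$: there is $c>0$ with $\mathcal G(X)\le-cX$. Condition DS for $X$: $\mathcal G(X)\le0$ and there is $c>0$ with $cX\le\mathfrak D(X)$. A Lyapunov operator is a self-adjoint $V\ge0$ with smallest eigenvalue $0$ and $\mathcal G(V)\le0$. Convergence to the set of ground states of $W$ means every limit point of $\rho_t$ as $t\to\infty$ lies in the set of density states $\rho$ with $\operatorname{tr}(W\rho)$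 equal to the smallest eigenvalue of $W$. *)

theory Defs
  imports "HOL-Analysis.Analysis"
begin

text \<open>Operators on the finite-dimensional Hilbert space are complex square matrices
  indexed by a finite type 'n.\<close>

type_synonym 'n op = "complex^'n^'n"

definition madj :: "'n::finite op \<Rightarrow> 'n op" where
  "madj A = (\<chi> i j. cnj (A $ j $ i))"

definition csmult :: "complex \<Rightarrow> 'n::finite op \<Rightarrow> 'n op" where
  "csmult c A = (\<chi> i j. c * A $ i $ j)"

definition self_adjoint :: "'n::finite op \<Rightarrow> bool" where
  "self_adjoint A \<longleftrightarrow> madj A = A"

definition psd :: "'n::finite op \<Rightarrow> bool" where
  "psd A \<longleftrightarrow> (\<forall>x::complex^'n. (\<Sum>i\<in>UNIV. cnj (x $ i) * (A *v x) $ i) \<in> \<real> \<and>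
                     0 \<le> Re (\<Sum>i\<in>UNIV. cnj (x $ i) * (A *v x) $ i))"

definition loewner_le :: "'n::finite op \<Rightarrow> 'n op \<Rightarrow> bool" where
  "loewner_le A B \<longleftrightarrow> psd (B - A)"

definition is_eigenvalue :: "'n::finite op \<Rightarrow> complex \<Rightarrow> bool" where
  "is_eigenvalue A c \<longleftrightarrow> (\<exists>v. v \<noteq> 0 \<and> A *v v = c *s v)"

text \<open>Smallest eigenvalue of a self-adjoint operator (whose eigenvalues are real).\<close>
definition min_eig :: "'n::finite op \<Rightarrow> real" where
  "min_eig A = Min {l::real. is_eigenvalue A (complex_of_real l)}"

definition density_state :: "'n::finite op \<Rightarrow> bool" where
  "density_state \<rho> \<longleftrightarrow> psd \<rho> \<and> trace \<rho> = 1"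

text \<open>Generator (Heisenberg picture, dissipative part) for coupling operators L 0, ..., L (K-1).\<close>
definition gen :: "nat \<Rightarrow> (nat \<Rightarrow> 'n::finite op) \<Rightarrow> 'n op \<Rightarrow> 'n op" where
  "gen K L X = (\<Sum>k<K. madj (L k) ** X ** L k
                  - csmult (1/2) (madj (L k) ** L k ** X)
                  - csmult (1/2) (X ** madj (L k) ** L k))"

definition lindblad :: "'n::finite op \<Rightarrow> nat \<Rightarrow> (nat \<Rightarrow> 'n op) \<Rightarrow> 'n op \<Rightarrow> 'n op" where
  "lindblad H K L \<rho> = csmult (- \<i>) (H ** \<rho> - \<rho> ** H)
     + (\<Sum>k<K. L k ** \<rho> ** madj (L k)
                - csmult (1/2) (madj (L k) ** L k ** \<rho>)
                - csmult (1/2) (\<rho> ** madj (L k) ** L k))"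

definition dissip :: "nat \<Rightarrow> (nat \<Rightarrow> 'n::finite op) \<Rightarrow> 'n op \<Rightarrow> 'n op" where
  "dissip K L X = gen K L (madj X ** X) - gen K L (madj X) ** X - madj X ** gen K L X"

definition condition_ES :: "nat \<Rightarrow> (nat \<Rightarrow> 'n::finite op) \<Rightarrow> 'n op \<Rightarrow> bool" where
  "condition_ES K L X \<longleftrightarrow> (\<exists>c>0. loewner_le (gen K L X) (- (c *\<^sub>R X)))"

definition condition_DS :: "nat \<Rightarrow> (nat \<Rightarrow> 'n::finite op) \<Rightarrow> 'n op \<Rightarrow> bool" where
  "condition_DS K L X \<longleftrightarrow> loewner_le (gen K L X) 0 \<and> (\<exists>c>0. loewner_le (c *\<^sub>R X) (dissip K L X))"

definition lyapunov_op :: "nat \<Rightarrow> (nat \<Rightarrow> 'n::finite op) \<Rightarrow> 'n op \<Rightarrow> bool" where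
  "lyapunov_op K L V \<longleftrightarrow> self_adjoint V \<and> psd V \<and> min_eig V = 0 \<and> loewner_le (gen K L V) 0"

definition limit_point_at_top :: "(real \<Rightarrow> 'n::finite op) \<Rightarrow> 'n op \<Rightarrow> bool" where
  "limit_point_at_top \<rho> \<sigma> \<longleftrightarrow>
     (\<exists>s::nat \<Rightarrow> real. filterlim s at_top sequentially \<and> (\<lambda>k. \<rho> (s k)) \<longlonglongrightarrow> \<sigma>)"

definition ground_states :: "'n::finite op \<Rightarrow> 'n op set" where
  "ground_states W = {\<rho>. density_state \<rho> \<and> trace (W ** \<rho>) = complex_of_real (min_eig W)}"

definition converges_to_ground_states :: "(real \<Rightarrow> 'n::finite op) \<Rightarrow> 'n op \<Rightarrow> bool" where
  "converges_to_ground_states \<rho> W \<longleftrightarrow> (\<forall>\<sigma>. limit_point_at_top \<rho> \<sigma> \<longrightarrow> \<sigma> \<in> ground_states W)"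

end

theory Submission
  imports Defs "HOL-Real_Asymp.Real_Asymp"
begin


definition cinner :: "complex^'n::finite \<Rightarrow> complex^'n \<Rightarrow> complex" where
  "cinner x y = (\<Sum>i\<in>UNIV. cnj (x $ i) * y $ i)"

definition qf :: "'n::finite op \<Rightarrow> complex^'n \<Rightarrow> complex" where
  "qf A x = cinner x (A *v x)"

lemma psd_iff: "psd A \<longleftrightarrow> (\<forall>x. qf A x \<in> \<real> \<and> 0 \<le> Re (qf A x))"
  by (simp add: psd_def qf_def cinner_def)

lemma cinner_add_right: "cinner x (y + z) = cinner x y + cinner x z"
  by (simp add: cinner_def algebra_simps sum.distrib)
lemma cinner_add_left: "cinner (x + y) z = cinner x z + cinner y z"
  by (simp add: cinner_def algebra_simps sum.distrib)
lemma cinner_diff_right: "cinner x (y - z) = cinner x y - cinner x z"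
  by (simp add: cinner_def algebra_simps sum_subtractf)
lemma cinner_diff_left: "cinner (x - y) z = cinner x z - cinner y z"
  by (simp add: cinner_def algebra_simps sum_subtractf)
lemma cinner_scale_right: "cinner x (c *s y) = c * cinner x y"
  by (simp add: cinner_def sum_distrib_left algebra_simps)
lemma cinner_scale_left: "cinner (c *s x) y = cnj c * cinner x y"
  by (simp add: cinner_def sum_distrib_left algebra_simps)
lemma cinner_zero_right[simp]: "cinner x 0 = 0"
  by (simp add: cinner_def)
lemma cinner_zero_left[simp]: "cinner 0 x = 0"
  by (simp add: cinner_def)
lemma cinner_cnj: "cinner y x = cnj (cinner x y)"
  by (simp add: cinner_def mult.commute)

lemma madj_nth[simp]: "madj A $ i $ j = cnj (A $ j $ i)"
  by (simp add: madj_def)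
lemma csmult_nth[simp]: "csmult c A $ i $ j = c * A $ i $ j"
  by (simp add: csmult_def)

lemma cinner_adj: "cinner x (A *v y) = cinner (madj A *v x) y"
proof -
  have "cinner x (A *v y) = (\<Sum>i\<in>UNIV. \<Sum>j\<in>UNIV. cnj (x $ i) * A $ i $ j * y $ j)"
    by (simp add: cinner_def matrix_vector_mult_def sum_distrib_left mult.assoc)
  also have "\<dots> = (\<Sum>j\<in>UNIV. \<Sum>i\<in>UNIV. cnj (x $ i) * A $ i $ j * y $ j)"
    by (rule sum.swap)
  also have "\<dots> = cinner (madj A *v x) y"
    by (simp add: cinner_def matrix_vector_mult_def sum_distrib_left sum_distrib_right mult.commute mult.left_commute)
  finally show ?thesis .
qed

lemma cinner_self: "cinner x x = of_real ((norm x)^2)"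
proof -
  have e: "cnj (x$i) * x$i = of_real ((norm (x$i))^2)" for i
    using complex_norm_square[of "x$i"] by (simp add: mult.commute)
  have "cinner x x = (\<Sum>i\<in>UNIV. of_real ((norm (x $ i))^2))"
    unfolding cinner_def using e by simp
  also have "\<dots> = of_real (\<Sum>i\<in>UNIV. (norm (x $ i))^2)" by simp
  also have "(\<Sum>i\<in>UNIV. (norm (x $ i))^2) = (norm x)^2"
    by (simp add: norm_vec_def L2_set_def sum_nonneg)
  finally show ?thesis .
qed

lemma madj_madj[simp]: "madj (madj A) = A"
  by (simp add: vec_eq_iff)
lemma madj_add: "madj (A + B) = madj A + madj B"
  by (simp add: vec_eq_iff)
lemma madj_diff: "madj (A - B) = madj A - madj B"
  by (simp add: vec_eq_iff)
lemma madj_uminus: "madj (- A) = - madj A"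
  by (simp add: vec_eq_iff)
lemma madj_scaleR: "madj (r *\<^sub>R A) = r *\<^sub>R madj A"
  by (simp add: vec_eq_iff)
lemma madj_csmult: "madj (csmult c A) = csmult (cnj c) (madj A)"
  by (simp add: vec_eq_iff)
lemma madj_mult: "madj (A ** B) = madj B ** madj A"
  by (simp add: vec_eq_iff matrix_matrix_mult_def mult.commute)
lemma madj_mat1[simp]: "madj (mat 1) = mat 1"
  by (simp add: vec_eq_iff mat_def)
lemma madj_zero[simp]: "madj 0 = 0"
  by (simp add: vec_eq_iff)
lemma madj_sum: "madj (\<Sum>k<(K::nat). f k) = (\<Sum>k<K. madj (f k))"
  by (induction K) (simp_all add: madj_add)
lemma self_adjoint_sum: "(\<And>k. k<K \<Longrightarrow> self_adjoint (f k)) \<Longrightarrow> self_adjoint (\<Sum>k<(K::nat). f k)"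
  by (simp add: self_adjoint_def madj_sum)

lemma qf_add: "qf (A + B) x = qf A x + qf B x"
  by (simp add: qf_def matrix_vector_mult_add_rdistrib cinner_add_right)
lemma qf_diff: "qf (A - B) x = qf A x - qf B x"
  by (simp add: qf_def matrix_vector_mult_diff_rdistrib cinner_diff_right)
lemma qf_uminus: "qf (- A) x = - qf A x"
  using qf_diff[of 0 A x] by (simp add: qf_def)
lemma scaleR_nth2: "(r *\<^sub>R A) $ i $ j = of_real r * (A $ i $ j :: complex)"
proof -
  have "(r *\<^sub>R A) $ i $ j = r *\<^sub>R (A $ i $ j)" by simp
  also have "\<dots> = of_real r * A $ i $ j" by (simp add: scaleR_conv_of_real)
  finally show ?thesis .
qed

lemma qf_scaleR: "qf (r *\<^sub>R A) x = of_real r * qf A x"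
  unfolding qf_def cinner_def matrix_vector_mult_def scaleR_nth2
  by (simp add: sum_distrib_left algebra_simps)
lemma qf_csmult: "qf (csmult c A) x = c * qf A x"
  by (simp add: qf_def cinner_def matrix_vector_mult_def sum_distrib_left algebra_simps)
lemma qf_zero[simp]: "qf 0 x = 0"
  by (simp add: qf_def)
lemma qf_sum: "qf (\<Sum>k<(K::nat). f k) x = (\<Sum>k<K. qf (f k) x)"
  by (induction K) (simp_all add: qf_add)
lemma qf_mat1: "qf (mat 1) x = of_real ((norm x)^2)"
  by (simp add: qf_def cinner_self)
lemma qf_mult: "qf (A ** B) x = cinner (madj A *v x) (B *v x)"
  by (simp add: qf_def cinner_adj matrix_vector_mul_assoc[symmetric])
lemma qf_sandwich: "qf (madj X ** A ** X) x = qf A (X *v x)"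
  by (simp add: qf_def cinner_adj matrix_vector_mul_assoc[symmetric] matrix_mul_assoc[symmetric])



lemma mv_scale: "A *v (c *s y) = c *s (A *v (y::complex^'n::finite))"
  by (simp add: vec_eq_iff matrix_vector_mult_def sum_distrib_left algebra_simps)

lemma qf_lin: "qf A (x + c *s y) = qf A x + c * cinner x (A *v y) + cnj c * cinner y (A *v x) + c * cnj c * qf A y"
  unfolding qf_def matrix_vector_right_distrib mv_scale cinner_add_left cinner_add_right
    cinner_scale_left cinner_scale_right
  by (simp add: algebra_simps)

lemma cinner_axis_left: "cinner (axis i 1) y = y $ i"
proof -
  have "cnj ((axis i 1) $ k) * y $ k = (if k = i then y $ i else 0)" for k
    by (simp add: axis_def)
  then show ?thesis unfolding cinner_def by simp
qed

lemma mv_axis: "(A *v axis j 1) $ i = A $ i $ j"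
proof -
  have "A $ i $ k * (axis j 1) $ k = (if k = j then A $ i $ j else 0)" for k
    by (simp add: axis_def)
  then show ?thesis unfolding matrix_vector_mult_def by simp
qed

lemma Reals_Im: "z \<in> \<real> \<longleftrightarrow> Im z = 0"
  by (simp add: complex_is_Real_iff)

lemma real_qf_herm:
  assumes "\<forall>x. qf A x \<in> \<real>"
  shows "cinner y (A *v x) = cnj (cinner x (A *v y))"
proof -
  define p where "p = cinner x (A *v y)"
  define q where "q = cinner y (A *v x)"
  have h1: "qf A (x + 1 *s y) = qf A x + p + q + qf A y"
    using qf_lin[of A x 1 y] by (simp add: p_def q_def)
  have h2: "qf A (x + \<i> *s y) = qf A x + \<i> * p - \<i> * q + qf A y"
    using qf_lin[of A x "\<i>" y] by (simp add: p_def q_def)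
  have r: "Im (qf A z) = 0" for z using assms by (simp add: Reals_Im)
  have "Im (qf A x + p + q + qf A y) = 0" unfolding h1[symmetric] by (rule r)
  then have i1: "Im p + Im q = 0" using r[of x] r[of y] by simp
  have "Im (qf A x + \<i> * p - \<i> * q + qf A y) = 0" unfolding h2[symmetric] by (rule r)
  then have i2: "Re p - Re q = 0" using r[of x] r[of y] by simp
  from i1 i2 have "q = cnj p" by (simp add: complex_eq_iff)
  then show ?thesis by (simp add: p_def q_def)
qed

lemma real_qf_self_adjoint:
  assumes "\<forall>x. qf A x \<in> \<real>"
  shows "self_adjoint A"
proof -
  have e: "A $ i $ j = cnj (A $ j $ i)" for i j
    using real_qf_herm[OF assms, of "axis i 1" "axis j 1"] by (simp add: cinner_axis_left mv_axis)
  have "madj A $ i $ j = A $ i $ j" for i j using e[of i j] by simp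
  then show ?thesis by (simp add: self_adjoint_def vec_eq_iff)
qed

lemma psd_self_adjoint: "psd A \<Longrightarrow> self_adjoint A"
  using real_qf_self_adjoint psd_iff by blast

lemma self_adjoint_herm: "self_adjoint A \<Longrightarrow> cinner y (A *v x) = cnj (cinner x (A *v y))"
  by (metis self_adjoint_def cinner_adj cinner_cnj)

lemma self_adjoint_qf_real: "self_adjoint A \<Longrightarrow> qf A x \<in> \<real>"
  using self_adjoint_herm[of A x x] by (simp add: qf_def Reals_cnj_iff)

lemma psd_qf: "psd A \<Longrightarrow> qf A x = of_real (Re (qf A x))"
  using psd_iff by (metis Reals_cases Re_complex_of_real)

lemma psd_CS:
  assumes "psd A"
  shows "(cmod (cinner x (A *v y)))^2 \<le> Re (qf A x) * Re (qf A y)"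
proof -
  define b where "b = cinner x (A *v y)"
  have herm: "cinner y (A *v x) = cnj b"
    unfolding b_def by (rule self_adjoint_herm[OF psd_self_adjoint[OF assms]])
  define qx where "qx = Re (qf A x)"
  define qy where "qy = Re (qf A y)"
  have qx0: "qx \<ge> 0" and qy0: "qy \<ge> 0" using assms by (auto simp: psd_iff qx_def qy_def)
  have e1: "cnj b * b = of_real ((cmod b)^2)"
    using complex_norm_square[of b] by (simp add: mult.commute)
  have e2: "b * cnj b = of_real ((cmod b)^2)"
    using complex_norm_square[of b] by simp
  have lin: "qf A (x + d *s y) = qf A x + d * b + cnj d * cnj b + d * cnj d * qf A y" for d
    using qf_lin[of A x d y] by (simp only: herm b_def[symmetric])
  have key: "qx - 2 * t * (cmod b)^2 + t^2 * (cmod b)^2 * qy \<ge> 0" for t :: real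
  proof -
    define d where "d = - of_real t * cnj b"
    have d1: "d * b = - of_real (t * (cmod b)^2)" unfolding d_def using e1
      by (simp add: mult.assoc)
    have d2: "cnj d * cnj b = - of_real (t * (cmod b)^2)" unfolding d_def using e2
      by (simp add: mult.assoc)
    have d3: "d * cnj d = of_real (t^2 * (cmod b)^2)" unfolding d_def using e1
      by (simp add: power2_eq_square mult.assoc mult.left_commute)
    have "0 \<le> Re (qf A (x + d *s y))" using assms psd_iff by blast
    also have "qf A (x + d *s y) = qf A x - of_real (2 * t * (cmod b)^2) + of_real (t^2 * (cmod b)^2) * qf A y"
      unfolding lin d1 d2 d3 by simp
    also have "Re \<dots> = qx - 2 * t * (cmod b)^2 + t^2 * (cmod b)^2 * qy"
      by (simp add: qx_def qy_def)
    finally show ?thesis .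
  qed
  define c where "c = (cmod b)^2"
  have c0: "c \<ge> 0" by (simp add: c_def)
  have key': "qx - 2 * t * c + t^2 * c * qy \<ge> 0" for t using key[of t] by (simp add: c_def)
  have "c \<le> qx * qy"
  proof (cases "qy > 0")
    case True
    have "qx - 2 * (1/qy) * c + (1/qy)^2 * c * qy \<ge> 0" by (rule key')
    moreover have "(1/qy)^2 * c * qy = c / qy" using True by (simp add: power2_eq_square)
    moreover have "2 * (1/qy) * c = 2 * (c / qy)" by simp
    ultimately have "qx - c / qy \<ge> 0" by simp
    then have "c / qy \<le> qx" by simp
    then show ?thesis using True by (simp add: divide_le_eq mult.commute)
  next
    case False
    then have qy: "qy = 0" using qy0 by simp
    show ?thesis
    proof (rule ccontr)
      assume "\<not> c \<le> qx * qy"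
      then have pos: "c > 0" using qy by simp
      have "qx - 2 * ((qx+1) / (2 * c)) * c + ((qx+1) / (2 * c))^2 * c * qy \<ge> 0"
        by (rule key')
      moreover have "2 * ((qx+1) / (2 * c)) * c = qx + 1" using pos by simp
      ultimately show False using qy by simp
    qed
  qed
  then show ?thesis by (simp add: b_def qx_def qy_def c_def)
qed

lemma psd_kernel:
  assumes "psd A" and "Re (qf A x) = 0"
  shows "A *v x = 0"
proof -
  have "(cmod (cinner (A *v x) (A *v x)))^2 \<le> Re (qf A (A *v x)) * Re (qf A x)"
    using psd_CS[OF assms(1), of "A *v x" x] .
  then have "(cmod (cinner (A *v x) (A *v x)))^2 \<le> 0" using assms(2) by simp
  then have "cinner (A *v x) (A *v x) = 0" by simp
  then show ?thesis by (simp add: cinner_self)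
qed

lemma qf_axis: "qf A (axis i 1) = A $ i $ i"
  by (simp add: qf_def cinner_axis_left mv_axis)

lemma cinner_axis_mv: "cinner (axis i 1) (A *v axis j 1) = A $ i $ j"
  by (simp add: cinner_axis_left mv_axis)

lemma psd_entry:
  assumes "psd A"
  shows "(cmod (A $ i $ j))^2 \<le> Re (A $ i $ i) * Re (A $ j $ j)"
  using psd_CS[OF assms, of "axis i 1" "axis j 1"] by (simp add: cinner_axis_mv qf_axis)

lemma psd_diag: assumes "psd A" shows "A $ i $ i = of_real (Re (A $ i $ i)) \<and> Re (A $ i $ i) \<ge> 0"
proof -
  have "qf A (axis i 1) = of_real (Re (qf A (axis i 1)))" using psd_qf[OF assms] .
  moreover have "0 \<le> Re (qf A (axis i 1))" using assms psd_iff by blast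
  ultimately show ?thesis by (simp add: qf_axis)
qed



definition outer :: "complex^'n::finite \<Rightarrow> complex^'n \<Rightarrow> 'n op" where
  "outer u v = (\<chi> i j. u $ i * cnj (v $ j))"

lemma outer_mv: "outer u v *v x = cinner v x *s u"
  by (simp add: vec_eq_iff outer_def matrix_vector_mult_def cinner_def sum_distrib_left algebra_simps)

lemma qf_outer: "qf (outer u u) x = of_real ((cmod (cinner u x))^2)"
proof -
  have "qf (outer u u) x = cinner u x * cinner x u"
    by (simp add: qf_def outer_mv cinner_scale_right)
  also have "\<dots> = cinner u x * cnj (cinner u x)" by (simp add: cinner_cnj[of x u])
  also have "\<dots> = of_real ((cmod (cinner u x))^2)" using complex_norm_square[of "cinner u x"] by simp
  finally show ?thesis .
qed

lemma mult_outer: "B ** outer u v = outer (B *v u) v"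
  by (simp add: vec_eq_iff outer_def matrix_vector_mult_def matrix_matrix_mult_def sum_distrib_right mult.assoc)

lemma outer_zero[simp]: "outer 0 v = 0"
  by (simp add: vec_eq_iff outer_def)

lemma self_adjoint_entry: "self_adjoint A \<Longrightarrow> cnj (A $ i $ j) = A $ j $ i"
  by (metis madj_nth self_adjoint_def)

lemma psd_zero_diag_col:
  assumes "psd A" "A $ i $ i = 0"
  shows "A $ j $ i = 0" "A $ i $ j = 0"
proof -
  have "Re (qf A (axis i 1)) = 0" using assms by (simp add: qf_axis)
  then have "A *v axis i 1 = 0" using psd_kernel[OF assms(1)] by blast
  then have "(A *v axis i 1) $ j = 0" by simp
  then show j: "A $ j $ i = 0" by (simp add: mv_axis)
  have "cnj (A $ j $ i) = A $ i $ j" using self_adjoint_entry[OF psd_self_adjoint[OF assms(1)]] .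
  with j show "A $ i $ j = 0" by simp
qed

lemma psd_decomp_aux:
  "\<forall>A::'n::finite op. psd A \<longrightarrow> card {i. A $ i $ i \<noteq> 0} = d \<longrightarrow> (\<exists>(m::nat) f. A = (\<Sum>k<m. outer (f k) (f k)))"
proof (induction d rule: less_induct)
  case (less d)
  show ?case
  proof (intro allI impI)
    fix A :: "'n op"
    assume psdA: "psd A" and cd: "card {i. A $ i $ i \<noteq> 0} = d"
    have saA: "self_adjoint A" using psd_self_adjoint[OF psdA] .
    show "\<exists>(m::nat) f. A = (\<Sum>k<m. outer (f k) (f k))"
    proof (cases "\<exists>j. A $ j $ j \<noteq> 0")
      case False
      then have "A $ i $ j = 0" for i j using psd_zero_diag_col[OF psdA] by blast
      then have "A = 0" by (simp add: vec_eq_iff)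
      then show ?thesis by (intro exI[of _ 0]) simp
    next
      case True
      then obtain j where j: "A $ j $ j \<noteq> 0" by blast
      define s where "s = Re (A $ j $ j)"
      have Ajj: "A $ j $ j = of_real s" using psd_diag[OF psdA, of j] by (simp add: s_def)
      have s0: "s > 0"
      proof -
        have "s \<ge> 0" using psd_diag[OF psdA, of j] by (simp add: s_def)
        moreover have "s \<noteq> 0" using j Ajj by auto
        ultimately show ?thesis by simp
      qed
      define u where "u = (\<chi> i. A $ i $ j / of_real (sqrt s))"
      define A' where "A' = A - outer u u"
      have cu: "cinner u x = (A *v x) $ j / of_real (sqrt s)" for x
      proof -
        have "cinner u x = (\<Sum>i\<in>UNIV. cnj (A $ i $ j) * x $ i) / of_real (sqrt s)"
          by (simp add: cinner_def u_def sum_divide_distrib)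
        also have "\<dots> = (A *v x) $ j / of_real (sqrt s)"
          by (simp add: matrix_vector_mult_def self_adjoint_entry[OF saA])
        finally show ?thesis .
      qed
      have psdA': "psd A'"
        unfolding psd_iff
      proof
        fix x
        have cs: "(cmod (cinner (axis j 1) (A *v x)))^2 \<le> Re (qf A (axis j 1)) * Re (qf A x)"
          by (rule psd_CS[OF psdA])
        then have cs': "(cmod ((A *v x) $ j))^2 \<le> s * Re (qf A x)"
          by (simp add: cinner_axis_left qf_axis s_def)
        have "(cmod (cinner u x))^2 = (cmod ((A *v x) $ j))^2 / s"
          using s0 by (simp add: cu norm_divide power_divide)
        also have "\<dots> \<le> Re (qf A x)" using cs' s0 by (simp add: divide_le_eq mult.commute)
        finally have le: "(cmod (cinner u x))^2 \<le> Re (qf A x)" .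
        have "qf A' x = qf A x - of_real ((cmod (cinner u x))^2)"
          by (simp add: A'_def qf_diff qf_outer)
        moreover have "qf A x \<in> \<real>" using psdA psd_iff by blast
        ultimately show "qf A' x \<in> \<real> \<and> 0 \<le> Re (qf A' x)" using le by auto
      qed
      have diag': "A' $ i $ i = A $ i $ i - of_real ((cmod (A $ i $ j))^2 / s)" for i
      proof -
        have "A' $ i $ i = A $ i $ i - (A $ i $ j / of_real (sqrt s)) * cnj (A $ i $ j / of_real (sqrt s))"
          by (simp add: A'_def outer_def u_def)
        also have "(A $ i $ j / of_real (sqrt s)) * cnj (A $ i $ j / of_real (sqrt s))
            = (A $ i $ j * cnj (A $ i $ j)) / of_real s"
        proof -
          have "sqrt s * sqrt s = s" using s0 by simp
          then have "complex_of_real (sqrt s) * of_real (sqrt s) = of_real s" by (metis of_real_mult)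
          then show ?thesis by (simp add: field_simps)
        qed
        also have "A $ i $ j * cnj (A $ i $ j) = of_real ((cmod (A $ i $ j))^2)"
          using complex_norm_square[of "A $ i $ j"] by simp
        finally show ?thesis by simp
      qed
      have sub: "{i. A' $ i $ i \<noteq> 0} \<subseteq> {i. A $ i $ i \<noteq> 0} - {j}"
      proof
        fix i assume i: "i \<in> {i. A' $ i $ i \<noteq> 0}"
        have "i \<noteq> j"
        proof
          assume "i = j"
          have "A' $ j $ j = of_real s - of_real ((cmod (of_real s :: complex))^2 / s)"
            using diag'[of j] unfolding Ajj .
          also have "(cmod (of_real s :: complex))^2 / s = s" using s0 by (simp add: power2_eq_square)
          finally have "A' $ j $ j = 0" by simp
          then show False using i \<open>i = j\<close> by simp
        qed
        moreover have "A $ i $ i \<noteq> 0"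
        proof
          assume z: "A $ i $ i = 0"
          then have "A $ i $ j = 0" using psd_zero_diag_col(2)[OF psdA z] by simp
          then have "A' $ i $ i = 0" using diag'[of i] z by simp
          then show False using i by simp
        qed
        ultimately show "i \<in> {i. A $ i $ i \<noteq> 0} - {j}" by simp
      qed
      have "card {i. A' $ i $ i \<noteq> 0} \<le> card ({i. A $ i $ i \<noteq> 0} - {j})"
        by (rule card_mono[OF _ sub]) simp
      also have "\<dots> < card {i. A $ i $ i \<noteq> 0}"
        using j by (intro card_Diff1_less) auto
      finally have lt: "card {i. A' $ i $ i \<noteq> 0} < d" using cd by simp
      obtain m :: nat and f where f: "A' = (\<Sum>k<m. outer (f k) (f k))"
        using less.IH[OF lt, rule_format, OF psdA' refl] by blast
      define g where "g = f(m := u)"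
      have "(\<Sum>k<Suc m. outer (g k) (g k)) = (\<Sum>k<m. outer (f k) (f k)) + outer u u"
        by (simp add: g_def)
      also have "\<dots> = A" using f unfolding A'_def by (metis diff_add_cancel)
      finally show ?thesis by (intro exI[of _ "Suc m"] exI[of _ g]) simp
    qed
  qed
qed

lemma psd_decomp: "psd A \<Longrightarrow> \<exists>(m::nat) f. A = (\<Sum>k<m. outer (f k) (f k))"
  using psd_decomp_aux by blast

lemma trace_outer: "trace (B ** outer u u) = qf B u"
  unfolding mult_outer by (simp add: trace_def outer_def qf_def cinner_def mult.commute)

lemma mult_sum_right: "B ** (\<Sum>k<(m::nat). M k) = (\<Sum>k<m. B ** M k)"
  by (induction m) (simp_all add: matrix_add_ldistrib)

lemma trace_sum: "trace (\<Sum>k<(m::nat). M k) = (\<Sum>k<m. trace (M k :: complex^'n::finite^'n))"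
  by (induction m) (simp_all add: trace_add trace_0[unfolded mat_0])

lemma trace_psd:
  assumes "psd B" "psd A"
  shows "trace (B ** A) = of_real (Re (trace (B ** A))) \<and> 0 \<le> Re (trace (B ** A))"
proof -
  obtain m :: nat and f where A: "A = (\<Sum>k<m. outer (f k) (f k))" using psd_decomp[OF assms(2)] by blast
  have t: "trace (B ** A) = (\<Sum>k<m. qf B (f k))"
    by (simp add: A mult_sum_right trace_sum trace_outer)
  have "qf B (f k) = of_real (Re (qf B (f k)))" for k using psd_qf[OF assms(1)] .
  then have "trace (B ** A) = of_real (\<Sum>k<m. Re (qf B (f k)))" using t by simp
  moreover have "0 \<le> (\<Sum>k<m. Re (qf B (f k)))"
    by (intro sum_nonneg) (use assms(1) psd_iff in blast)
  ultimately show ?thesis by simp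
qed

lemma trace_psd_zero:
  assumes "psd B" "psd A" "trace (B ** A) = 0"
  shows "B ** A = 0"
proof -
  obtain m :: nat and f where A: "A = (\<Sum>k<m. outer (f k) (f k))" using psd_decomp[OF assms(2)] by blast
  have t: "trace (B ** A) = (\<Sum>k<m. qf B (f k))"
    by (simp add: A mult_sum_right trace_sum trace_outer)
  then have "Re (\<Sum>k<m. qf B (f k)) = 0" using assms(3) by simp
  then have "(\<Sum>k<m. Re (qf B (f k))) = 0" by simp
  moreover have "\<forall>k\<in>{..<m}. 0 \<le> Re (qf B (f k))" using assms(1) psd_iff by blast
  ultimately have "\<forall>k\<in>{..<m}. Re (qf B (f k)) = 0"
    using sum_nonneg_eq_0_iff[of "{..<m}" "\<lambda>k. Re (qf B (f k))"] by blast
  then have "\<forall>k\<in>{..<m}. B *v f k = 0" using psd_kernel[OF assms(1)] by blast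
  then show ?thesis by (simp add: A mult_sum_right mult_outer)
qed

lemma density_entry:
  assumes "density_state A"
  shows "cmod (A $ i $ j) \<le> 1"
proof -
  have psdA: "psd A" and tr: "trace A = 1" using assms by (auto simp: density_state_def)
  have d: "Re (A $ k $ k) \<ge> 0" for k using psd_diag[OF psdA] by blast
  have "(\<Sum>k\<in>UNIV. Re (A $ k $ k)) = Re (trace A)" by (simp add: trace_def)
  then have s1: "(\<Sum>k\<in>UNIV. Re (A $ k $ k)) = 1" using tr by simp
  have le1: "Re (A $ k $ k) \<le> 1" for k
    using member_le_sum[of k UNIV "\<lambda>k. Re (A $ k $ k)"] d s1 by simp
  have "(cmod (A $ i $ j))^2 \<le> Re (A $ i $ i) * Re (A $ j $ j)" by (rule psd_entry[OF psdA])
  also have "\<dots> \<le> 1 * 1" using d le1 by (intro mult_mono) auto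
  finally have "(cmod (A $ i $ j))^2 \<le> 1^2" by simp
  then show ?thesis by (rule power2_le_imp_le) simp
qed

definition msum :: "'n::finite op \<Rightarrow> real" where
  "msum M = (\<Sum>i\<in>UNIV. \<Sum>j\<in>UNIV. cmod (M $ i $ j))"

lemma trace_density_bound:
  assumes "density_state A"
  shows "cmod (trace (M ** A)) \<le> msum M"
proof -
  have "trace (M ** A) = (\<Sum>i\<in>UNIV. \<Sum>j\<in>UNIV. M $ i $ j * A $ j $ i)"
    by (simp add: trace_def matrix_matrix_mult_def)
  then have "cmod (trace (M ** A)) \<le> (\<Sum>i\<in>UNIV. cmod (\<Sum>j\<in>UNIV. M $ i $ j * A $ j $ i))"
    using norm_sum by simp
  also have "\<dots> \<le> (\<Sum>i\<in>UNIV. \<Sum>j\<in>UNIV. cmod (M $ i $ j * A $ j $ i))"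
    by (intro sum_mono norm_sum)
  also have "\<dots> \<le> (\<Sum>i\<in>UNIV. \<Sum>j\<in>UNIV. cmod (M $ i $ j))"
    using density_entry[OF assms] by (intro sum_mono) (simp add: norm_mult mult_left_le)
  finally show ?thesis by (simp add: msum_def)
qed



lemma mm_add_l: "(A + B) ** C = A ** C + B ** (C::'n::finite op)"
  by (simp add: vec_eq_iff matrix_matrix_mult_def algebra_simps sum.distrib)
lemma mm_diff_l: "(A - B) ** C = A ** C - B ** (C::'n::finite op)"
  by (simp add: vec_eq_iff matrix_matrix_mult_def algebra_simps sum_subtractf)
lemma mm_diff_r: "C ** (A - B) = C ** A - C ** (B::'n::finite op)"
  by (simp add: vec_eq_iff matrix_matrix_mult_def algebra_simps sum_subtractf)
lemma mm_scaleR_l: "(r *\<^sub>R A) ** C = r *\<^sub>R (A ** (C::'n::finite op))"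
  by (simp add: vec_eq_iff matrix_matrix_mult_def scaleR_sum_right)
lemma mm_scaleR_r: "C ** (r *\<^sub>R A) = r *\<^sub>R (C ** (A::'n::finite op))"
  by (simp add: vec_eq_iff matrix_matrix_mult_def scaleR_sum_right)
lemma mm_csmult_l: "csmult c A ** C = csmult c (A ** (C::'n::finite op))"
  by (simp add: vec_eq_iff matrix_matrix_mult_def sum_distrib_left algebra_simps)
lemma mm_csmult_r: "C ** csmult c A = csmult c (C ** (A::'n::finite op))"
  by (simp add: vec_eq_iff matrix_matrix_mult_def sum_distrib_left algebra_simps)
lemma mm_zero_l[simp]: "0 ** (C::'n::finite op) = 0"
  by (simp add: vec_eq_iff matrix_matrix_mult_def)
lemma mm_zero_r[simp]: "(C::'n::finite op) ** 0 = 0"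
  by (simp add: vec_eq_iff matrix_matrix_mult_def)
lemma mm_uminus_l: "(- A) ** (C::'n::finite op) = - (A ** C)"
  by (simp add: vec_eq_iff matrix_matrix_mult_def sum_negf)
lemma mult_sum_left: "(\<Sum>k<(m::nat). M k) ** B = (\<Sum>k<m. M k ** (B::'n::finite op))"
  by (induction m) (simp_all add: mm_add_l)
lemma csmult_add: "csmult c (A + B) = csmult c A + csmult c (B::'n::finite op)"
  by (simp add: vec_eq_iff algebra_simps)
lemma csmult_diff: "csmult c (A - B) = csmult c A - csmult c (B::'n::finite op)"
  by (simp add: vec_eq_iff algebra_simps)
lemma csmult_scaleR: "csmult c (r *\<^sub>R A) = r *\<^sub>R csmult c (A::'n::finite op)"
  by (simp add: vec_eq_iff scaleR_nth2 algebra_simps)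
lemma trace_csmult: "trace (csmult c (A::'n::finite op)) = c * trace A"
  by (simp add: trace_def sum_distrib_left)
lemma trace_scaleR: "trace (r *\<^sub>R (A::'n::finite op)) = of_real r * trace A"
  unfolding trace_def scaleR_nth2 by (simp add: sum_distrib_left)
lemma trace_uminus: "trace (- (A::'n::finite op)) = - trace A"
  by (simp add: trace_def sum_negf)
lemma trace_cyc: "trace ((A::'n::finite op) ** B) = trace (B ** A)"
  by (rule trace_mul_sym)

lemma linear_lmul: fixes A :: "'n::finite op" shows "linear (\<lambda>\<rho>::'n op. A ** \<rho>)"
  by (rule linearI) (simp_all add: matrix_add_ldistrib mm_scaleR_r)
lemma linear_rmul: fixes A :: "'n::finite op" shows "linear (\<lambda>\<rho>::'n op. \<rho> ** A)"
  by (rule linearI) (simp_all add: mm_add_l mm_scaleR_l)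
lemma linear_csmult: "linear (\<lambda>\<rho>::'n::finite op. csmult c \<rho>)"
  by (rule linearI) (simp_all add: csmult_add csmult_scaleR)
lemma linear_sandwich: fixes A B :: "'n::finite op" shows "linear (\<lambda>\<rho>::'n op. A ** \<rho> ** B)"
  using linear_compose[OF linear_lmul[of A] linear_rmul[of B]] by (simp add: o_def)

lemma linear_lindblad: fixes H :: "'n::finite op" and L :: "nat \<Rightarrow> 'n op" shows "linear (lindblad H K L)"
proof -
  have l1: "linear (\<lambda>\<rho>::'n op. csmult (- \<i>) (H ** \<rho> - \<rho> ** H))"
    using linear_compose[OF linear_compose_sub[OF linear_lmul linear_rmul] linear_csmult]
    by (simp add: o_def)
  have l2: "linear (\<lambda>\<rho>::'n op. L k ** \<rho> ** madj (L k)
                - csmult (1/2) (madj (L k) ** L k ** \<rho>)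
                - csmult (1/2) (\<rho> ** madj (L k) ** L k))" for k
  proof -
    have a: "linear (\<lambda>\<rho>::'n op. csmult (1/2) (madj (L k) ** L k ** \<rho>))"
      using linear_compose[OF linear_lmul linear_csmult] by (simp add: o_def)
    have b: "linear (\<lambda>\<rho>::'n op. csmult (1/2) (\<rho> ** madj (L k) ** L k))"
      using linear_compose[OF linear_sandwich[of "mat 1" "madj (L k) ** L k"] linear_csmult]
      by (simp add: o_def matrix_mul_assoc)
    show ?thesis
      by (intro linear_compose_sub linear_sandwich a b)
  qed
  show ?thesis
    unfolding lindblad_def[abs_def]
    by (intro linear_compose_add l1 linear_compose_sum) (use l2 in blast)
qed

lemma linear_gen: fixes L :: "nat \<Rightarrow> 'n::finite op" shows "linear (gen K L)"
proof -
  have l2: "linear (\<lambda>X::'n op. madj (L k) ** X ** L k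
                  - csmult (1/2) (madj (L k) ** L k ** X)
                  - csmult (1/2) (X ** madj (L k) ** L k))" for k
  proof -
    have a: "linear (\<lambda>\<rho>::'n op. csmult (1/2) (madj (L k) ** L k ** \<rho>))"
      using linear_compose[OF linear_lmul linear_csmult] by (simp add: o_def)
    have b: "linear (\<lambda>\<rho>::'n op. csmult (1/2) (\<rho> ** madj (L k) ** L k))"
      using linear_compose[OF linear_sandwich[of "mat 1" "madj (L k) ** L k"] linear_csmult]
      by (simp add: o_def matrix_mul_assoc)
    show ?thesis
      by (intro linear_compose_sub linear_sandwich a b)
  qed
  show ?thesis
    unfolding gen_def[abs_def]
    by (intro linear_compose_sum) (use l2 in blast)
qed

lemma bounded_linear_lindblad: fixes H :: "'n::finite op" and L :: "nat \<Rightarrow> 'n op" shows "bounded_linear (lindblad H K L)"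
  using linear_lindblad linear_conv_bounded_linear by blast



lemma trace_dual_k:
  fixes X \<rho> L :: "'n::finite op"
  shows "trace (X ** (L ** \<rho> ** madj L - csmult (1/2) (madj L ** L ** \<rho>) - csmult (1/2) (\<rho> ** madj L ** L)))
       = trace ((madj L ** X ** L - csmult (1/2) (madj L ** L ** X) - csmult (1/2) (X ** madj L ** L)) ** \<rho>)"
proof -
  define P where "P = madj L"
  have t1: "trace (X ** (L ** \<rho> ** P)) = trace (P ** X ** L ** \<rho>)"
  proof -
    have "trace (X ** (L ** \<rho> ** P)) = trace ((X ** L ** \<rho>) ** P)" by (simp add: matrix_mul_assoc)
    also have "\<dots> = trace (P ** (X ** L ** \<rho>))" by (rule trace_cyc)
    finally show ?thesis by (simp add: matrix_mul_assoc)
  qed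
  have t2: "trace (X ** (P ** L ** \<rho>)) = trace (X ** P ** L ** \<rho>)" by (simp add: matrix_mul_assoc)
  have t3: "trace (X ** (\<rho> ** P ** L)) = trace (P ** L ** X ** \<rho>)"
  proof -
    have "trace (X ** (\<rho> ** P ** L)) = trace ((X ** \<rho>) ** (P ** L))" by (simp add: matrix_mul_assoc)
    also have "\<dots> = trace ((P ** L) ** (X ** \<rho>))" by (rule trace_cyc)
    finally show ?thesis by (simp add: matrix_mul_assoc)
  qed
  show ?thesis
    unfolding P_def[symmetric]
    by (simp add: mm_diff_r mm_diff_l mm_csmult_r mm_csmult_l trace_sub trace_csmult t1 t2 t3)
qed

lemma trace_dual:
  fixes X H :: "'n::finite op" and L :: "nat \<Rightarrow> 'n op"
  assumes comm: "X ** H = H ** X"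
  shows "trace (X ** lindblad H K L \<rho>) = trace (gen K L X ** \<rho>)"
proof -
  have h: "trace (X ** csmult (- \<i>) (H ** \<rho> - \<rho> ** H)) = 0"
  proof -
    have "trace (X ** (\<rho> ** H)) = trace ((X ** \<rho>) ** H)" by (simp add: matrix_mul_assoc)
    also have "\<dots> = trace (H ** (X ** \<rho>))" by (rule trace_cyc)
    also have "\<dots> = trace (X ** H ** \<rho>)" by (simp add: matrix_mul_assoc comm)
    finally have "trace (X ** (\<rho> ** H)) = trace (X ** (H ** \<rho>))" by (simp add: matrix_mul_assoc)
    then show ?thesis by (simp add: mm_csmult_r mm_diff_r trace_csmult trace_sub)
  qed
  show ?thesis
    unfolding lindblad_def gen_def
    by (simp add: matrix_add_ldistrib trace_add h mult_sum_right mult_sum_left trace_sum trace_dual_k)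
qed

lemma gen_mat1: "gen K L (mat 1) = 0"
  by (simp add: gen_def vec_eq_iff)

lemma trace_lindblad: "trace (lindblad H K L \<rho>) = 0"
  using trace_dual[of "mat 1" H K L \<rho>] by (simp add: gen_mat1 trace_def)

lemma madj_lindblad:
  fixes H :: "'n::finite op" and L :: "nat \<Rightarrow> 'n op"
  assumes "self_adjoint H"
  shows "madj (lindblad H K L \<rho>) = lindblad H K L (madj \<rho>)"
proof -
  have hH: "madj H = H" using assms by (simp add: self_adjoint_def)
  have a: "madj (csmult (- \<i>) (H ** \<rho> - \<rho> ** H)) = csmult (- \<i>) (H ** madj \<rho> - madj \<rho> ** H)"
    by (simp add: vec_eq_iff madj_mult hH madj_csmult madj_diff algebra_simps)
  have b: "madj (L k ** \<rho> ** madj (L k) - csmult (1/2) (madj (L k) ** L k ** \<rho>)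
                - csmult (1/2) (\<rho> ** madj (L k) ** L k))
        = L k ** madj \<rho> ** madj (L k) - csmult (1/2) (madj (L k) ** L k ** madj \<rho>)
                - csmult (1/2) (madj \<rho> ** madj (L k) ** L k)" for k
    by (simp add: madj_diff madj_add madj_csmult madj_mult matrix_mul_assoc algebra_simps)
  show ?thesis
    unfolding lindblad_def by (simp add: madj_add madj_sum a b)
qed

lemma qf_mult_zero_r: "B *v x = 0 \<Longrightarrow> qf (A ** B) x = 0"
  by (simp add: qf_def matrix_vector_mul_assoc[symmetric])

lemma qf_mult_zero_l: "self_adjoint A \<Longrightarrow> A *v x = 0 \<Longrightarrow> qf (A ** B) x = 0"
  by (simp add: qf_mult self_adjoint_def)

lemma cross_pos:
  fixes H \<sigma> :: "'n::finite op" and L :: "nat \<Rightarrow> 'n op"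
  assumes "psd \<sigma>" "\<sigma> *v x = 0"
  shows "0 \<le> Re (qf (lindblad H K L \<sigma>) x)"
proof -
  have sa: "self_adjoint \<sigma>" using psd_self_adjoint[OF assms(1)] .
  have h: "qf (csmult (- \<i>) (H ** \<sigma> - \<sigma> ** H)) x = 0"
    using qf_mult_zero_r[OF assms(2), of H] qf_mult_zero_l[OF sa assms(2), of H]
    by (simp add: qf_csmult qf_diff)
  have k: "Re (qf (L k ** \<sigma> ** madj (L k) - csmult (1/2) (madj (L k) ** L k ** \<sigma>)
                - csmult (1/2) (\<sigma> ** madj (L k) ** L k)) x) \<ge> 0" for k
  proof -
    have z1: "qf (madj (L k) ** L k ** \<sigma>) x = 0" using qf_mult_zero_r[OF assms(2)] .
    have z2: "qf (\<sigma> ** madj (L k) ** L k) x = 0"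
      using qf_mult_zero_l[OF sa assms(2), of "madj (L k) ** L k"] by (simp add: matrix_mul_assoc)
    have "qf (L k ** \<sigma> ** madj (L k)) x = qf \<sigma> (madj (L k) *v x)"
      using qf_sandwich[of "madj (L k)" \<sigma> x] by simp
    moreover have "Re (qf \<sigma> (madj (L k) *v x)) \<ge> 0" using assms(1) unfolding psd_iff by blast
    ultimately have "Re (qf (L k ** \<sigma> ** madj (L k)) x) \<ge> 0" by simp
    then show ?thesis by (simp add: qf_diff qf_csmult z1 z2)
  qed
  show ?thesis
    unfolding lindblad_def qf_add qf_sum h
    by (simp add: sum_nonneg k)
qed

lemma gen_WW:
  assumes "self_adjoint W"
  shows "gen K L (W ** W) = dissip K L W + gen K L W ** W + W ** gen K L W"
  using assms by (simp add: dissip_def self_adjoint_def)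



lemma decr_lemma:
  fixes f f' :: "real \<Rightarrow> real"
  assumes der: "\<And>t. t \<ge> 0 \<Longrightarrow> (f has_real_derivative f' t) (at t within {0..})"
    and neg: "\<And>t. t > 0 \<Longrightarrow> f' t \<le> 0"
    and ab: "0 \<le> a" "a \<le> b"
  shows "f b \<le> f a"
proof (cases "a = b")
  case True then show ?thesis by simp
next
  case False
  then have lt: "a < b" using ab by simp
  have cont: "continuous_on {a..b} f"
  proof -
    have "continuous_on {0..} f"
      unfolding continuous_on_eq_continuous_within
    proof
      fix x :: real assume "x \<in> {0..}"
      then show "continuous (at x within {0..}) f" using DERIV_continuous[OF der[of x]] by simp
    qed
    then show ?thesis by (rule continuous_on_subset) (use ab in auto)
  qed
  have derat: "(f has_real_derivative f' x) (at x)" if "x > 0" for x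
  proof -
    have "x \<in> interior {0::real..}" using that by simp
    then have "at x within {0..} = at x" by (rule at_within_interior)
    then show ?thesis using der[of x] that by simp
  qed
  have dif: "f differentiable (at x)" if "a < x" "x < b" for x
    using derat[of x] that ab real_differentiable_def by auto
  obtain l z where z: "a < z" "z < b" "DERIV f z :> l" "f b - f a = (b - a) * l"
    using MVT[OF lt cont dif] by blast
  have "l = f' z" using DERIV_unique[OF z(3) derat[of z]] z ab by simp
  then have "l \<le> 0" using neg[of z] z ab by simp
  then have "(b - a) * l \<le> 0" using lt by (simp add: mult_nonneg_nonpos)
  then show ?thesis using z by simp
qed

lemma qf_scale: "qf A (c *s x) = (c * cnj c) * qf A x"
  using qf_lin[of A 0 c x] by (simp add: qf_def)

lemma unit_psd:
  assumes "\<And>u. norm u = 1 \<Longrightarrow> 0 \<le> Re (qf A u)"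
  shows "0 \<le> Re (qf A x)"
proof (cases "x = 0")
  case True then show ?thesis by (simp add: qf_def)
next
  case False
  define c where "c = complex_of_real (1 / norm x)"
  have nu: "norm (c *s x) = 1"
  proof -
    have "(c *s x) $ i = ((1 / norm x) *\<^sub>R x) $ i" for i
    proof -
      have "((1/norm x) *\<^sub>R x) $ i = (1/norm x) *\<^sub>R (x $ i)" by simp
      also have "\<dots> = c * x $ i" by (simp add: c_def scaleR_conv_of_real)
      finally show ?thesis by simp
    qed
    then have "c *s x = (1 / norm x) *\<^sub>R x" by (simp add: vec_eq_iff)
    then show ?thesis using False by simp
  qed
  have "qf A (c *s x) = of_real ((1 / norm x)^2) * qf A x"
    by (simp add: qf_scale c_def power2_eq_square)
  then have "0 \<le> (1 / norm x)^2 * Re (qf A x)" using assms[OF nu] by simp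
  moreover have "(1 / norm x)^2 > 0" using False by simp
  ultimately show ?thesis by (simp add: zero_le_mult_iff)
qed

lemma qf_bound: "cmod (qf M x) \<le> msum M * (norm x)^2"
proof -
  have "qf M x = (\<Sum>i\<in>UNIV. \<Sum>j\<in>UNIV. cnj (x $ i) * M $ i $ j * x $ j)"
    by (simp add: qf_def cinner_def matrix_vector_mult_def sum_distrib_left mult.assoc)
  then have "cmod (qf M x) \<le> (\<Sum>i\<in>UNIV. cmod (\<Sum>j\<in>UNIV. cnj (x $ i) * M $ i $ j * x $ j))"
    using norm_sum by simp
  also have "\<dots> \<le> (\<Sum>i\<in>UNIV. \<Sum>j\<in>UNIV. cmod (cnj (x $ i) * M $ i $ j * x $ j))"
    by (intro sum_mono norm_sum)
  also have "\<dots> \<le> (\<Sum>i\<in>UNIV. \<Sum>j\<in>UNIV. cmod (M $ i $ j) * (norm x)^2)"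
  proof (intro sum_mono)
    fix i j
    have "cmod (cnj (x $ i) * M $ i $ j * x $ j) = cmod (M $ i $ j) * (cmod (x $ i) * cmod (x $ j))"
      by (simp add: norm_mult)
    also have "\<dots> \<le> cmod (M $ i $ j) * (norm x * norm x)"
      by (intro mult_left_mono mult_mono Finite_Cartesian_Product.norm_nth_le) auto
    finally show "cmod (cnj (x $ i) * M $ i $ j * x $ j) \<le> cmod (M $ i $ j) * (norm x)^2"
      by (simp add: power2_eq_square)
  qed
  also have "\<dots> = msum M * (norm x)^2"
    by (simp add: msum_def sum_distrib_right)
  finally show ?thesis .
qed

lemma isCont_qf: "isCont (\<lambda>p. qf (fst p) (snd p)) (p :: ('n::finite op) \<times> (complex^'n))"
  unfolding qf_def cinner_def matrix_vector_mult_def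
  by (simp add: continuous_intros)

lemma bl_trace: "bounded_linear (\<lambda>A::'n::finite op. Re (trace (X ** A)))"
proof -
  have "linear (\<lambda>A::'n op. Re (trace (X ** A)))"
    by (rule linearI) (simp_all add: matrix_add_ldistrib trace_add mm_scaleR_r trace_scaleR)
  then show ?thesis using linear_conv_bounded_linear by blast
qed

lemma bl_trace_Im: "bounded_linear (\<lambda>A::'n::finite op. Im (trace (X ** A)))"
proof -
  have "linear (\<lambda>A::'n op. Im (trace (X ** A)))"
    by (rule linearI) (simp_all add: matrix_add_ldistrib trace_add mm_scaleR_r trace_scaleR)
  then show ?thesis using linear_conv_bounded_linear by blast
qed

lemma bl_qf: "bounded_linear (\<lambda>A::'n::finite op. Re (qf A x))"
proof -
  have "linear (\<lambda>A::'n op. Re (qf A x))"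
    by (rule linearI) (simp_all add: qf_add qf_scaleR)
  then show ?thesis using linear_conv_bounded_linear by blast
qed

lemma bl_madj: "bounded_linear (madj :: 'n::finite op \<Rightarrow> 'n op)"
proof -
  have "linear (madj :: 'n op \<Rightarrow> 'n op)"
    by (rule linearI) (simp_all add: madj_add madj_scaleR)
  then show ?thesis using linear_conv_bounded_linear by blast
qed

lemma deriv_trace: fixes \<rho> :: "real \<Rightarrow> 'n::finite op" shows
  "(\<rho> has_vector_derivative \<rho>') F \<Longrightarrow>
   ((\<lambda>t. Re (trace (X ** \<rho> t))) has_real_derivative Re (trace (X ** \<rho>'))) F"
  using bounded_linear.has_vector_derivative[OF bl_trace, of \<rho> \<rho>' F X]
  by (simp add: has_real_derivative_iff_has_vector_derivative)

lemma deriv_trace_Im: fixes \<rho> :: "real \<Rightarrow> 'n::finite op" shows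
  "(\<rho> has_vector_derivative \<rho>') F \<Longrightarrow>
   ((\<lambda>t. Im (trace (X ** \<rho> t))) has_real_derivative Im (trace (X ** \<rho>'))) F"
  using bounded_linear.has_vector_derivative[OF bl_trace_Im, of \<rho> \<rho>' F X]
  by (simp add: has_real_derivative_iff_has_vector_derivative)

lemma deriv_qf: fixes \<rho> :: "real \<Rightarrow> 'n::finite op" shows
  "(\<rho> has_vector_derivative \<rho>') F \<Longrightarrow>
   ((\<lambda>t. Re (qf (\<rho> t) x)) has_real_derivative Re (qf \<rho>' x)) F"
  using bounded_linear.has_vector_derivative[OF bl_qf, of \<rho> \<rho>' F x]
  by (simp add: has_real_derivative_iff_has_vector_derivative)

lemma deriv_normsq:
  fixes A :: "real \<Rightarrow> 'a::real_inner"
  assumes "(A has_vector_derivative A') (at t within S)"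
  shows "((\<lambda>t. A t \<bullet> A t) has_real_derivative 2 * (A t \<bullet> A')) (at t within S)"
proof -
  have d: "(A has_derivative (\<lambda>h. h *\<^sub>R A')) (at t within S)"
    using assms by (simp add: has_vector_derivative_def)
  have "((\<lambda>t. A t \<bullet> A t) has_derivative (\<lambda>h. A t \<bullet> (h *\<^sub>R A') + (h *\<^sub>R A') \<bullet> A t)) (at t within S)"
    by (rule has_derivative_inner[OF d d])
  then have "((\<lambda>t. A t \<bullet> A t) has_derivative (\<lambda>h. h * (2 * (A t \<bullet> A')))) (at t within S)"
    by (simp add: inner_commute algebra_simps)
  then show ?thesis unfolding has_field_derivative_def
    by (rule has_derivative_eq_rhs) (auto simp: fun_eq_iff)
qed

lemma ode_zero:
  fixes A :: "real \<Rightarrow> 'a::real_inner"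
  assumes der: "\<And>t. t \<ge> 0 \<Longrightarrow> (A has_vector_derivative T (A t)) (at t within {0..})"
    and bl: "bounded_linear T" and A0: "A 0 = 0" and t: "t \<ge> 0"
  shows "A t = 0"
proof -
  obtain C where C: "C > 0" "\<And>x. norm (T x) \<le> norm x * C"
    using bounded_linear.pos_bounded[OF bl] by blast
  define g where "g t = exp (- 2 * C * t) * (A t \<bullet> A t)" for t
  define g' where "g' t = (- 2 * C) * exp (- 2 * C * t) * (A t \<bullet> A t) + exp (- 2 * C * t) * (2 * (A t \<bullet> T (A t)))" for t
  have dg: "(g has_real_derivative g' t) (at t within {0..})" if "t \<ge> 0" for t
  proof -
    have e: "((\<lambda>t. exp (- 2 * C * t)) has_real_derivative (- 2 * C) * exp (- 2 * C * t)) (at t within {0..})"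
      by (auto intro!: derivative_eq_intros)
    show ?thesis
      unfolding g_def g'_def
      using DERIV_mult[OF e deriv_normsq[OF der[OF that]]] by (simp add: algebra_simps)
  qed
  have ng: "g' t \<le> 0" for t
  proof -
    have "A t \<bullet> T (A t) \<le> norm (A t) * norm (T (A t))" by (rule Cauchy_Schwarz_ineq2[THEN order_trans[OF abs_ge_self]])
    also have "\<dots> \<le> norm (A t) * (norm (A t) * C)" using C(2) by (intro mult_left_mono) auto
    also have "\<dots> = C * (A t \<bullet> A t)" by (simp add: power2_norm_eq_inner[symmetric] power2_eq_square)
    finally have "A t \<bullet> T (A t) \<le> C * (A t \<bullet> A t)" .
    then have "2 * (A t \<bullet> T (A t)) - 2 * C * (A t \<bullet> A t) \<le> 0" by simp
    then have "exp (- 2 * C * t) * (2 * (A t \<bullet> T (A t)) - 2 * C * (A t \<bullet> A t)) \<le> 0"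
      by (simp add: mult_nonneg_nonpos)
    then show ?thesis by (simp add: g'_def algebra_simps)
  qed
  have "g t \<le> g 0" by (rule decr_lemma[OF dg ng]) (use t in auto)
  then have "exp (- 2 * C * t) * (A t \<bullet> A t) \<le> 0" by (simp add: g_def A0)
  then have "A t \<bullet> A t \<le> 0" by (simp add: mult_le_0_iff)
  then have "A t \<bullet> A t = 0" using inner_ge_zero[of "A t"] by linarith
  then show ?thesis by simp
qed



lemma const_lemma:
  fixes f :: "real \<Rightarrow> real"
  assumes der: "\<And>t. t \<ge> 0 \<Longrightarrow> (f has_real_derivative 0) (at t within {0..})" and t: "t \<ge> 0"
  shows "f t = f 0"
proof -
  have "f t \<le> f 0" by (rule decr_lemma[OF der]) (use t in auto)
  moreover have "- f t \<le> - f 0"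
    by (rule decr_lemma[of "\<lambda>t. - f t" "\<lambda>_. 0"]) (use t der in \<open>auto intro!: derivative_eq_intros\<close>)
  ultimately show ?thesis by simp
qed

locale lsys =
  fixes H :: "'n::finite op" and K :: nat and L :: "nat \<Rightarrow> 'n op" and \<rho> :: "real \<Rightarrow> 'n op"
  assumes H_sa: "self_adjoint H"
    and init: "density_state (\<rho> 0)"
    and ode: "\<And>t. t \<ge> 0 \<Longrightarrow> (\<rho> has_vector_derivative lindblad H K L (\<rho> t)) (at t within {0..})"
begin

abbreviation "LL \<equiv> lindblad H K L"

lemma herm: assumes "t \<ge> 0" shows "self_adjoint (\<rho> t)"
proof -
  define A where "A t = \<rho> t - madj (\<rho> t)" for t
  have der: "(A has_vector_derivative LL (A t)) (at t within {0..})" if "t \<ge> 0" for t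
  proof -
    have "(A has_vector_derivative LL (\<rho> t) - madj (LL (\<rho> t))) (at t within {0..})"
      unfolding A_def
      by (intro has_vector_derivative_diff ode that bounded_linear.has_vector_derivative[OF bl_madj])
    moreover have "LL (\<rho> t) - madj (LL (\<rho> t)) = LL (A t)"
      by (simp add: A_def madj_lindblad[OF H_sa] linear_diff[OF linear_lindblad])
    ultimately show ?thesis by simp
  qed
  have "psd (\<rho> 0)" using init by (simp add: density_state_def)
  then have "madj (\<rho> 0) = \<rho> 0" using psd_self_adjoint self_adjoint_def by blast
  then have "A 0 = 0" by (simp add: A_def)
  then have "A t = 0" using ode_zero[OF der bounded_linear_lindblad _ assms] by blast
  then show ?thesis by (simp add: A_def self_adjoint_def)
qed

lemma trace1: assumes "t \<ge> 0" shows "trace (\<rho> t) = 1"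
proof -
  have r: "Re (trace (mat 1 ** \<rho> t)) = Re (trace (mat 1 ** \<rho> 0))"
    by (rule const_lemma[OF _ assms])
       (use deriv_trace[OF ode, of _ "mat 1"] in \<open>simp add: trace_lindblad\<close>)
  have i: "Im (trace (mat 1 ** \<rho> t)) = Im (trace (mat 1 ** \<rho> 0))"
    by (rule const_lemma[OF _ assms])
       (use deriv_trace_Im[OF ode, of _ "mat 1"] in \<open>simp add: trace_lindblad\<close>)
  have "trace (\<rho> 0) = 1" using init by (simp add: density_state_def)
  with r i show ?thesis by (simp add: complex_eq_iff)
qed

end


context lsys begin

definition aa :: real where "aa = msum (LL (mat 1)) + 1"

definition sig :: "real \<Rightarrow> real \<Rightarrow> 'n op" where
  "sig e t = \<rho> t + (e * exp (aa * t)) *\<^sub>R mat 1"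

lemma sig_qf: "Re (qf (sig e t) x) = Re (qf (\<rho> t) x) + e * exp (aa * t) * (norm x)^2"
  by (simp add: sig_def qf_add qf_scaleR qf_mat1)

lemma sig_sa: "t \<ge> 0 \<Longrightarrow> self_adjoint (sig e t)"
  using herm[of t] by (simp add: sig_def self_adjoint_def madj_add madj_scaleR)

lemma sig_der: "t \<ge> 0 \<Longrightarrow> (sig e has_vector_derivative LL (\<rho> t) + (e * aa * exp (aa * t)) *\<^sub>R mat 1) (at t within {0..})"
  unfolding sig_def
  by (rule has_vector_derivative_add[OF ode]) (auto intro!: derivative_eq_intros)

lemma LL_sig: "LL (sig e t) = LL (\<rho> t) + (e * exp (aa * t)) *\<^sub>R LL (mat 1)"
  by (simp add: sig_def linear_add[OF linear_lindblad] linear_scale[OF linear_lindblad])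

lemma phi_der: "t \<ge> 0 \<Longrightarrow> ((\<lambda>t. Re (qf (sig e t) x)) has_real_derivative
    Re (qf (LL (\<rho> t)) x) + e * aa * exp (aa * t) * (norm x)^2) (at t within {0..})"
  using deriv_qf[OF sig_der, of t e x] by (simp add: qf_add qf_scaleR qf_mat1)

lemma pd_eps:
  assumes e: "e > 0" and t0: "t0 \<ge> 0" and u0: "norm u0 = 1"
  shows "Re (qf (sig e t0) u0) > 0"
proof (rule ccontr)
  assume "\<not> ?thesis"
  then have bad: "Re (qf (sig e t0) u0) \<le> 0" by simp
  define h where "h p = Re (qf (sig e (fst p)) (snd p))" for p :: "real \<times> (complex^'n)"
  define D where "D = {0..t0} \<times> sphere (0::complex^'n) 1"
  define S' where "S' = {p \<in> D. h p \<le> 0}"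
  define S where "S = fst ` S'"
  have contsig: "continuous_on {0..} (sig e)"
    unfolding continuous_on_eq_continuous_within
    using has_vector_derivative_continuous[OF sig_der] by auto
  have hcont: "continuous_on D h"
  proof -
    have c1: "continuous_on D (\<lambda>p. (sig e (fst p), snd p))"
    proof (intro continuous_on_Pair continuous_on_snd continuous_on_id)
      show "continuous_on D (\<lambda>p. sig e (fst p))"
        by (rule continuous_on_compose2[OF contsig continuous_on_fst]) (auto simp: D_def)
    qed
    have c2: "continuous_on UNIV (\<lambda>p::('n op) \<times> (complex^'n). Re (qf (fst p) (snd p)))"
      by (intro continuous_at_imp_continuous_on ballI continuous_Re isCont_qf)
    show ?thesis
      unfolding h_def using continuous_on_compose2[OF c2 c1] by auto
  qed
  have cD: "compact D" unfolding D_def by (intro compact_Times compact_Icc compact_sphere)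
  have "closed S'" unfolding S'_def
    by (rule continuous_on_closed_Collect_le[OF hcont continuous_on_const compact_imp_closed[OF cD]])
  then have "compact S'"
    using compact_Int_closed[OF cD] by (metis (no_types, lifting) Int_absorb1 S'_def mem_Collect_eq subsetI)
  then have cS: "closed S" unfolding S_def
    by (intro compact_imp_closed compact_continuous_image continuous_on_fst continuous_on_id)
  have t0S: "t0 \<in> S" unfolding S_def S'_def D_def h_def
    using t0 u0 bad by (auto intro!: image_eqI[of _ fst "(t0, u0)"])
  have S0: "\<And>t. t \<in> S \<Longrightarrow> 0 \<le> t \<and> t \<le> t0" unfolding S_def S'_def D_def by auto
  have bb: "bdd_below S" unfolding bdd_below_def using S0 by blast
  define ts where "ts = Inf S"
  have tsS: "ts \<in> S" unfolding ts_def using closed_contains_Inf[OF _ bb cS] t0S by blast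
  obtain x where x: "norm x = 1" "h (ts, x) \<le> 0"
    using tsS unfolding S_def S'_def D_def by auto
  have ts0: "ts \<ge> 0" using S0 tsS by simp
  have good: "h (t, y) > 0" if "0 \<le> t" "t < ts" "norm y = 1" for t y
  proof (rule ccontr)
    assume "\<not> h (t, y) > 0"
    then have "t \<in> S" unfolding S_def S'_def D_def
      using that S0[OF tsS] by (auto intro!: image_eqI[of _ fst "(t, y)"])
    then have "ts \<le> t" unfolding ts_def by (rule cInf_lower[OF _ bb])
    then show False using that by simp
  qed
  have tspos: "ts > 0"
  proof (rule ccontr)
    assume "\<not> ts > 0"
    then have "ts = 0" using ts0 by simp
    moreover have "Re (qf (\<rho> 0) x) \<ge> 0" using init by (simp add: density_state_def psd_iff)
    ultimately have "h (ts, x) > 0" using e x by (simp add: h_def sig_qf)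
    then show False using x by simp
  qed
  have atts: "at ts within {0..} = at ts"
    by (rule at_within_interior) (use tspos in simp)
  have psd_ts: "psd (sig e ts)"
    unfolding psd_iff
  proof
    fix y
    have real: "qf (sig e ts) y \<in> \<real>" by (rule self_adjoint_qf_real[OF sig_sa[OF ts0]])
    have "0 \<le> Re (qf (sig e ts) u)" if u: "norm u = 1" for u
    proof -
      have "((\<lambda>t. Re (qf (sig e t) u)) has_real_derivative
          Re (qf (LL (\<rho> ts)) u) + e * aa * exp (aa * ts) * (norm u)^2) (at ts)"
        using phi_der[OF ts0] atts by simp
      then have "isCont (\<lambda>t. Re (qf (sig e t) u)) ts" by (rule DERIV_isCont)
      then have lim: "((\<lambda>t. Re (qf (sig e t) u)) \<longlongrightarrow> Re (qf (sig e ts) u)) (at_left ts)"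
        by (simp add: isCont_def filterlim_at_split)
      have ev: "eventually (\<lambda>t. 0 \<le> Re (qf (sig e t) u)) (at_left ts)"
      proof -
        have "eventually (\<lambda>t. t > 0) (at_left ts)"
          using tspos by (intro eventually_at_leftI[of 0]) auto
        moreover have "eventually (\<lambda>t. t < ts) (at_left ts)" by (simp add: eventually_at_filter)
        ultimately show ?thesis
        proof eventually_elim
          case (elim t) then show ?case using good[of t u] u by (simp add: h_def less_imp_le)
        qed
      qed
      show ?thesis by (rule tendsto_lowerbound[OF lim ev]) simp
    qed
    then have "0 \<le> Re (qf (sig e ts) y)" by (rule unit_psd)
    with real show "qf (sig e ts) y \<in> \<real> \<and> 0 \<le> Re (qf (sig e ts) y)" by simp
  qed
  have hx0: "Re (qf (sig e ts) x) = 0"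
  proof -
    have "0 \<le> Re (qf (sig e ts) x)" using psd_ts unfolding psd_iff by blast
    moreover have "Re (qf (sig e ts) x) \<le> 0" using x by (simp add: h_def)
    ultimately show ?thesis by simp
  qed
  have ker: "sig e ts *v x = 0" by (rule psd_kernel[OF psd_ts hx0])
  define dphi where "dphi = Re (qf (LL (\<rho> ts)) x) + e * aa * exp (aa * ts) * (norm x)^2"
  have dphi: "((\<lambda>t. Re (qf (sig e t) x)) has_real_derivative dphi) (at ts)"
    using phi_der[OF ts0, of e x] atts by (simp add: dphi_def)
  have dpos: "dphi > 0"
  proof -
    have cp: "0 \<le> Re (qf (LL (sig e ts)) x)" by (rule cross_pos[OF psd_ts ker])
    have "Re (qf (LL (sig e ts)) x) = Re (qf (LL (\<rho> ts)) x) + e * exp (aa * ts) * Re (qf (LL (mat 1)) x)"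
      by (simp add: LL_sig qf_add qf_scaleR)
    moreover have "Re (qf (LL (mat 1)) x) \<le> msum (LL (mat 1))"
      using qf_bound[of "LL (mat 1)" x] x complex_Re_le_cmod[of "qf (LL (mat 1)) x"] by simp
    moreover have "e * exp (aa * ts) > 0" using e by simp
    ultimately have "Re (qf (LL (\<rho> ts)) x) \<ge> - (e * exp (aa * ts)) * msum (LL (mat 1))"
    proof -
      assume a1: "Re (qf (LL (sig e ts)) x) = Re (qf (LL (\<rho> ts)) x) + e * exp (aa * ts) * Re (qf (LL (mat 1)) x)"
        and a2: "Re (qf (LL (mat 1)) x) \<le> msum (LL (mat 1))" and a3: "e * exp (aa * ts) > 0"
      have "e * exp (aa * ts) * Re (qf (LL (mat 1)) x) \<le> e * exp (aa * ts) * msum (LL (mat 1))"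
        using a2 a3 by (intro mult_left_mono) auto
      then show ?thesis using a1 cp by simp
    qed
    then have "dphi \<ge> - (e * exp (aa * ts)) * msum (LL (mat 1)) + e * aa * exp (aa * ts)"
      using x by (simp add: dphi_def)
    also have "- (e * exp (aa * ts)) * msum (LL (mat 1)) + e * aa * exp (aa * ts) = e * exp (aa * ts)"
      by (simp add: aa_def algebra_simps)
    finally show ?thesis using e by (smt (verit) exp_gt_zero mult_pos_pos)
  qed
  obtain d where d: "d > 0" "\<And>k. k > 0 \<Longrightarrow> k < d \<Longrightarrow> Re (qf (sig e (ts - k)) x) < Re (qf (sig e ts) x)"
    using DERIV_pos_inc_left[OF dphi dpos] by blast
  define k where "k = min d ts / 2"
  have k: "k > 0" "k < d" "k < ts" using d tspos by (auto simp: k_def)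
  have "Re (qf (sig e (ts - k)) x) < 0" using d(2)[OF k(1,2)] hx0 by simp
  moreover have "h (ts - k, x) > 0" by (rule good) (use k x in auto)
  ultimately show False by (simp add: h_def)
qed

lemma psd_rho: assumes t: "t \<ge> 0" shows "psd (\<rho> t)"
  unfolding psd_iff
proof
  fix x
  have real: "qf (\<rho> t) x \<in> \<real>" by (rule self_adjoint_qf_real[OF herm[OF t]])
  define Kc where "Kc = exp (aa * t) * (norm x)^2"
  have Kc0: "Kc \<ge> 0" by (simp add: Kc_def)
  have "0 \<le> Re (qf (\<rho> t) x) + ee" if ee: "ee > 0" for ee
  proof -
    define e where "e = ee / (Kc + 1)"
    have e0: "e > 0" using ee Kc0 by (simp add: e_def)
    have "0 \<le> Re (qf (sig e t) x)"
      by (rule unit_psd) (use pd_eps[OF e0 t] in \<open>simp add: less_imp_le\<close>)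
    then have "0 \<le> Re (qf (\<rho> t) x) + e * Kc" by (simp add: sig_qf Kc_def mult.assoc)
    moreover have "e * Kc \<le> ee"
    proof -
      have "e * Kc = ee * (Kc / (Kc + 1))" by (simp add: e_def)
      also have "\<dots> \<le> ee * 1" using ee Kc0 by (intro mult_left_mono) auto
      finally show ?thesis by simp
    qed
    ultimately show ?thesis by simp
  qed
  then have "0 \<le> Re (qf (\<rho> t) x)"
    using field_le_epsilon[of 0 "Re (qf (\<rho> t) x)"] by simp
  with real show "qf (\<rho> t) x \<in> \<real> \<and> 0 \<le> Re (qf (\<rho> t) x)" by simp
qed

lemma density_rho: "t \<ge> 0 \<Longrightarrow> density_state (\<rho> t)"
  by (simp add: density_state_def psd_rho trace1)

end


lemma psd_add: "psd A \<Longrightarrow> psd B \<Longrightarrow> psd (A + B)"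
  by (auto simp: psd_iff qf_add)

lemma psd_scaleR: "psd A \<Longrightarrow> c \<ge> 0 \<Longrightarrow> psd (c *\<^sub>R A)"
  by (auto simp: psd_iff qf_scaleR)

lemma psd_sum: "(\<And>l. l < N \<Longrightarrow> psd (f l)) \<Longrightarrow> psd (\<Sum>l<(N::nat). f l)"
proof (induction N)
  case 0 then show ?case by (simp add: psd_iff)
next
  case (Suc N) then show ?case by (simp add: psd_add)
qed

lemma psd_sandwich: "psd g \<Longrightarrow> psd (madj Y ** g ** Y)"
  by (auto simp: psd_iff qf_sandwich)

lemma mm_uminus_r: "(C::'n::finite op) ** (- A) = - (C ** A)"
  by (simp add: vec_eq_iff matrix_matrix_mult_def sum_negf)

lemma aux_delta:
  fixes d P Q R G :: real
  assumes "d > 0" "0 \<le> d*d*R - d*P - d*Q + G"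
  shows "P + Q \<le> d*R + G/d"
proof -
  have "d * (P + Q) \<le> d * (d*R + G/d)" using assms by (simp add: algebra_simps)
  then show ?thesis using assms(1) by (simp add: mult_le_cancel_left_pos)
qed

lemma msum_nonneg: "msum M \<ge> 0"
  by (simp add: msum_def sum_nonneg)

context lsys begin

definition V :: "'n op \<Rightarrow> real \<Rightarrow> real" where "V X t = Re (trace (X ** \<rho> t))"

lemma V_der:
  assumes "X ** H = H ** X" "t \<ge> 0"
  shows "(V X has_real_derivative V (gen K L X) t) (at t within {0..})"
  using deriv_trace[OF ode[OF assms(2)], of X] trace_dual[OF assms(1)]
  unfolding V_def[abs_def] by simp

lemma V_psd: "psd X \<Longrightarrow> t \<ge> 0 \<Longrightarrow> 0 \<le> V X t \<and> trace (X ** \<rho> t) = of_real (V X t)"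
  using trace_psd[OF _ psd_rho] by (simp add: V_def)

lemma V_bound: "t \<ge> 0 \<Longrightarrow> \<bar>V X t\<bar> \<le> msum X"
  using trace_density_bound[OF density_rho, of t X] abs_Re_le_cmod[of "trace (X ** \<rho> t)"]
  by (simp add: V_def)

lemma V_loewner:
  assumes "loewner_le A B" "t \<ge> 0"
  shows "V A t \<le> V B t"
proof -
  have "0 \<le> Re (trace ((B - A) ** \<rho> t))"
    using trace_psd[OF _ psd_rho[OF assms(2)], of "B - A"] assms(1) by (simp add: loewner_le_def)
  then show ?thesis by (simp add: V_def mm_diff_l trace_sub)
qed

lemma V_add: "V (A + B) t = V A t + V B t"
  by (simp add: V_def mm_add_l trace_add)
lemma V_diff: "V (A - B) t = V A t - V B t"
  by (simp add: V_def mm_diff_l trace_sub)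
lemma V_scaleR: "V (c *\<^sub>R A) t = c * V A t"
  by (simp add: V_def mm_scaleR_l trace_scaleR)
lemma V_uminus: "V (- A) t = - V A t"
  by (simp add: V_def mm_uminus_l trace_uminus)
lemma V_zero: "V 0 t = 0"
  by (simp add: V_def trace_def)

lemma tendsto_from_V:
  assumes "psd X" "(V X \<longlongrightarrow> 0) at_top"
  shows "((\<lambda>t. trace (X ** \<rho> t)) \<longlongrightarrow> 0) at_top"
proof -
  have lim: "((\<lambda>t. of_real (V X t) :: complex) \<longlongrightarrow> of_real 0) at_top"
    by (rule tendsto_of_real[OF assms(2)])
  have ev: "eventually (\<lambda>t. of_real (V X t) = trace (X ** \<rho> t)) at_top"
    using V_psd[OF assms(1)] by (intro eventually_at_top_linorderI[of 0]) simp
  show ?thesis using tendsto_cong[OF ev] lim by simp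
qed

lemma ES_conv:
  assumes psdX: "psd X" and comm: "X ** H = H ** X" and c: "c > 0"
    and es: "loewner_le (gen K L X) (- (c *\<^sub>R X))"
  shows "(V X \<longlongrightarrow> 0) at_top"
proof -
  define g where "g t = exp (c * t) * V X t" for t
  define g' where "g' t = c * exp (c * t) * V X t + exp (c * t) * V (gen K L X) t" for t
  have dg: "(g has_real_derivative g' t) (at t within {0..})" if "t \<ge> 0" for t
  proof -
    have e: "((\<lambda>t. exp (c * t)) has_real_derivative c * exp (c * t)) (at t within {0..})"
      by (auto intro!: derivative_eq_intros)
    show ?thesis unfolding g_def g'_def
      using DERIV_mult[OF e V_der[OF comm that]] by (simp add: algebra_simps)
  qed
  have ng: "g' t \<le> 0" if "t > 0" for t
  proof -
    have "V (gen K L X) t \<le> V (- (c *\<^sub>R X)) t" using V_loewner[OF es] that by simp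
    then have "V (gen K L X) t + c * V X t \<le> 0" by (simp add: V_uminus V_scaleR)
    then have "exp (c * t) * (V (gen K L X) t + c * V X t) \<le> 0"
      by (simp add: mult_nonneg_nonpos)
    then show ?thesis by (simp add: g'_def algebra_simps)
  qed
  have up: "V X t \<le> V X 0 * exp (- c * t)" if "t \<ge> 0" for t
  proof -
    have "g t \<le> g 0" by (rule decr_lemma[OF dg ng]) (use that in auto)
    then have "exp (c * t) * V X t \<le> V X 0" by (simp add: g_def)
    then have "exp (- c * t) * (exp (c * t) * V X t) \<le> exp (- c * t) * V X 0"
      by (intro mult_left_mono) auto
    then show ?thesis by (simp add: exp_minus field_simps)
  qed
  have "((\<lambda>t. exp (- c * t)) \<longlongrightarrow> 0) at_top"
    using c by real_asymp
  then have lim: "((\<lambda>t. V X 0 * exp (- c * t)) \<longlongrightarrow> 0) at_top"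
    by (rule tendsto_mult_right_zero)
  show ?thesis
  proof (rule tendsto_sandwich[OF _ _ tendsto_const lim])
    show "eventually (\<lambda>t. 0 \<le> V X t) at_top"
      using V_psd[OF psdX] by (intro eventually_at_top_linorderI[of 0]) simp
    show "eventually (\<lambda>t. V X t \<le> V X 0 * exp (- c * t)) at_top"
      using up by (intro eventually_at_top_linorderI[of 0]) simp
  qed
qed

lemma DS_conv:
  assumes psdX: "psd X" and saX: "self_adjoint X" and comm: "X ** H = H ** X" and c: "c > 0"
    and gneg: "loewner_le (gen K L X) 0"
    and ds: "loewner_le (c *\<^sub>R X) (dissip K L X)"
  shows "(V X \<longlongrightarrow> 0) at_top"
proof -
  have V0: "0 \<le> V X t" if "t \<ge> 0" for t using V_psd[OF psdX that] by simp
  have gn: "V (gen K L X) t \<le> 0" if "t > 0" for t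
    using V_loewner[OF gneg, of t] that V_zero[of t] by simp
  have Vdec: "V X b \<le> V X a" if "0 \<le> a" "a \<le> b" for a b
    by (rule decr_lemma[OF V_der[OF comm] gn]) (use that in auto)
  show ?thesis
  proof (cases "\<forall>v>0. \<exists>t0\<ge>0. V X t0 < v")
    case True
    show ?thesis
    proof (rule order_tendstoI)
      fix a :: real assume a0: "a < 0"
      show "eventually (\<lambda>t. a < V X t) at_top"
      proof (intro eventually_at_top_linorderI[of 0])
        fix t :: real assume "t \<ge> 0"
        then show "a < V X t" using V0[of t] a0 by linarith
      qed
    next
      fix a :: real assume a: "0 < a"
      obtain t0 where t0: "t0 \<ge> 0" "V X t0 < a" using True a by blast
      show "eventually (\<lambda>t. V X t < a) at_top"
      proof (intro eventually_at_top_linorderI[of t0])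
        fix t :: real assume "t \<ge> t0"
        then show "V X t < a" using Vdec[of t0 t] t0 by linarith
      qed
    qed
  next
    case False
    then obtain v where v: "v > 0" "\<And>t. t \<ge> 0 \<Longrightarrow> V X t \<ge> v" by (auto simp: not_less)
    define g where "g = - gen K L X"
    have psdg: "psd g" using gneg by (simp add: loewner_le_def g_def)
    define B1 where "B1 = msum (X ** g ** X)"
    define B2 where "B2 = msum (X ** X)"
    define \<delta> where "\<delta> = c * v / (2 * (B1 + 1))"
    have B1: "B1 \<ge> 0" by (simp add: B1_def msum_nonneg)
    have \<delta>0: "\<delta> > 0" using c v B1 by (simp add: \<delta>_def)
    have \<delta>B1: "\<delta> * B1 \<le> c * v / 2"
    proof -
      have "\<delta> * B1 = (c * v / 2) * (B1 / (B1 + 1))" by (simp add: \<delta>_def field_simps)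
      also have "\<dots> \<le> (c * v / 2) * 1" using c v B1 by (intro mult_left_mono) auto
      finally show ?thesis by simp
    qed
    have commXX: "(X ** X) ** H = H ** (X ** X)"
    proof -
      have "(X ** X) ** H = X ** (X ** H)" by (simp add: matrix_mul_assoc)
      also have "\<dots> = X ** (H ** X)" by (simp only: comm)
      also have "\<dots> = (X ** H) ** X" by (simp add: matrix_mul_assoc)
      also have "\<dots> = (H ** X) ** X" by (simp only: comm)
      also have "\<dots> = H ** (X ** X)" by (simp add: matrix_mul_assoc)
      finally show ?thesis .
    qed
    define Yop where "Yop = \<delta> *\<^sub>R X - mat 1"
    have madjY: "madj Yop = Yop"
      using saX by (simp add: Yop_def madj_diff madj_scaleR self_adjoint_def)
    have Yexp: "madj Yop ** g ** Yop = (\<delta> * \<delta>) *\<^sub>R (X ** g ** X) - \<delta> *\<^sub>R (X ** g) - \<delta> *\<^sub>R (g ** X) + g"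
    proof -
      have s1: "Yop ** g = \<delta> *\<^sub>R (X ** g) - g"
        unfolding Yop_def by (simp add: mm_diff_l mm_scaleR_l)
      have "Yop ** g ** Yop = (\<delta> *\<^sub>R (X ** g) - g) ** (\<delta> *\<^sub>R X - mat 1)"
        unfolding s1 by (simp add: Yop_def)
      also have "\<dots> = (\<delta> * \<delta>) *\<^sub>R (X ** g ** X) - \<delta> *\<^sub>R (X ** g) - \<delta> *\<^sub>R (g ** X) + g"
        by (simp add: mm_diff_l mm_diff_r mm_scaleR_l mm_scaleR_r scaleR_diff_right algebra_simps)
      finally show ?thesis unfolding madjY .
    qed
    have key: "V (gen K L (X ** X)) t - V (gen K L X) t / \<delta> \<ge> c * v / 2" if t: "t > 0" for t
    proof -
      have t0: "t \<ge> 0" using t by simp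
      have psdY: "psd (madj Yop ** g ** Yop)" by (rule psd_sandwich[OF psdg])
      have "0 \<le> V (madj Yop ** g ** Yop) t"
        using V_psd[OF psdY t0] by simp
      then have i1: "0 \<le> \<delta> * \<delta> * V (X ** g ** X) t - \<delta> * V (X ** g) t - \<delta> * V (g ** X) t + V g t"
        by (simp add: Yexp V_add V_diff V_scaleR)
      have i2: "V (X ** g ** X) t \<le> B1" using V_bound[OF t0, of "X ** g ** X"] by (simp add: B1_def)
      have i3: "V (dissip K L X) t \<ge> c * V X t"
        using V_loewner[OF ds t0] by (simp add: V_scaleR)
      have gWW: "gen K L (X ** X) = dissip K L X + gen K L X ** X + X ** gen K L X"
        by (rule gen_WW[OF saX])
      have i4: "V (gen K L (X ** X)) t = V (dissip K L X) t - V (g ** X) t - V (X ** g) t"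
      proof -
        have "gen K L X = - g" by (simp add: g_def)
        then show ?thesis by (simp add: gWW V_add V_diff mm_uminus_l mm_uminus_r V_uminus)
      qed
      have i5: "V (gen K L X) t = - V g t" by (simp add: g_def V_uminus)
      have "V (X ** g) t + V (g ** X) t \<le> \<delta> * V (X ** g ** X) t + V g t / \<delta>"
        by (rule aux_delta[OF \<delta>0 i1])
      moreover have "\<delta> * V (X ** g ** X) t \<le> \<delta> * B1" using i2 \<delta>0 by (simp add: mult_left_mono)
      ultimately have p1: "V (X ** g) t + V (g ** X) t \<le> c * v / 2 + V g t / \<delta>" using \<delta>B1 by linarith
      have p2: "c * v \<le> c * V X t" using v(2)[OF t0] c by (simp add: mult_left_mono)
      have p3: "V (gen K L X) t / \<delta> = - (V g t / \<delta>)" using i5 by simp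
      show ?thesis using p1 p2 p3 i3 i4 by linarith
    qed
    define F where "F t = - (V (X ** X) t - V X t / \<delta> - (c * v / 2) * t)" for t
    define F' where "F' t = - (V (gen K L (X ** X)) t - V (gen K L X) t / \<delta> - c * v / 2)" for t
    have dF: "(F has_real_derivative F' t) (at t within {0..})" if "t \<ge> 0" for t
      unfolding F_def F'_def
      using DERIV_minus[OF DERIV_diff[OF DERIV_diff[OF V_der[OF commXX that] DERIV_cdivide[OF V_der[OF comm that], of \<delta>]]
               DERIV_cmult[OF DERIV_ident, of "c * v / 2"]]] by simp
    have nF: "F' t \<le> 0" if "t > 0" for t using key[OF that] by (simp add: F'_def)
    define T where "T = 2 * (\<bar>B2\<bar> + \<bar>V (X ** X) 0\<bar> + \<bar>V X 0 / \<delta>\<bar> + 1) / (c * v)"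
    have T0: "T \<ge> 0" using c v by (simp add: T_def)
    have "F T \<le> F 0" by (rule decr_lemma[OF dF nF]) (use T0 in auto)
    then have "V (X ** X) T - V X T / \<delta> - (c * v / 2) * T \<ge> V (X ** X) 0 - V X 0 / \<delta>"
      by (simp add: F_def)
    moreover have "V (X ** X) T \<le> B2" using V_bound[OF T0, of "X ** X"] by (simp add: B2_def)
    moreover have "V X T / \<delta> \<ge> 0" using V0[OF T0] \<delta>0 by simp
    moreover have "(c * v / 2) * T = \<bar>B2\<bar> + \<bar>V (X ** X) 0\<bar> + \<bar>V X 0 / \<delta>\<bar> + 1"
      using c v by (simp add: T_def)
    moreover have "B2 \<le> \<bar>B2\<bar>" by (rule abs_ge_self)
    moreover have "- V (X ** X) 0 \<le> \<bar>V (X ** X) 0\<bar>" by (rule abs_ge_minus_self)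
    moreover have "V X 0 / \<delta> \<le> \<bar>V X 0 / \<delta>\<bar>" by (rule abs_ge_self)
    ultimately have False by linarith
    then show ?thesis ..
  qed
qed

end


lemma inner_cinner: "inner x y = Re (cinner x (y::complex^'n::finite))"
  by (simp add: inner_vec_def inner_complex_def cinner_def)

lemma eig_orth:
  assumes sa: "self_adjoint W" and u: "W *v u = complex_of_real l *s u" and v: "W *v v = complex_of_real m *s v"
    and lm: "l \<noteq> m"
  shows "cinner u v = 0"
proof -
  have "complex_of_real m * cinner u v = cinner u (W *v v)" by (simp add: v cinner_scale_right)
  also have "\<dots> = cinner (W *v u) v" using sa by (simp add: cinner_adj self_adjoint_def)
  also have "\<dots> = complex_of_real l * cinner u v" by (simp add: u cinner_scale_left)
  finally have "complex_of_real m * cinner u v = complex_of_real l * cinner u v" .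
  then have "(complex_of_real m - complex_of_real l) * cinner u v = 0" by (simp add: algebra_simps)
  moreover have "complex_of_real m - complex_of_real l \<noteq> 0" using lm by simp
  ultimately show ?thesis by simp
qed

lemma scale_inj:
  assumes "v \<noteq> 0" "(a::complex) *s v = b *s v"
  shows "a = b"
proof -
  obtain i where i: "v $ i \<noteq> 0" using assms(1) by (auto simp: vec_eq_iff)
  have "(a *s v) $ i = (b *s v) $ i" using assms(2) by (rule arg_cong)
  then have "a * v $ i = b * v $ i" by (simp only: vector_smult_component)
  then show ?thesis using i by simp
qed

lemma eig_finite:
  assumes sa: "self_adjoint (W::'n::finite op)"
  shows "finite {l::real. is_eigenvalue W (of_real l)}"
proof -
  define E where "E = {l::real. is_eigenvalue W (of_real l)}"
  define f where "f l = (SOME v. v \<noteq> 0 \<and> W *v v = complex_of_real l *s v)" for l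
  have f: "f l \<noteq> 0 \<and> W *v f l = complex_of_real l *s f l" if "l \<in> E" for l
  proof -
    have "\<exists>v. v \<noteq> 0 \<and> W *v v = complex_of_real l *s v" using that by (simp add: E_def is_eigenvalue_def)
    then show ?thesis unfolding f_def by (rule someI_ex)
  qed
  have inj: "inj_on f E"
  proof (rule inj_onI)
    fix l m assume lm: "l \<in> E" "m \<in> E" "f l = f m"
    have "complex_of_real l *s f l = complex_of_real m *s f l"
      using f[OF lm(1)] f[OF lm(2)] lm(3) by metis
    then have "complex_of_real l = complex_of_real m" using scale_inj f[OF lm(1)] by blast
    then show "l = m" by simp
  qed
  have po: "pairwise orthogonal (f ` E)"
    unfolding pairwise_def orthogonal_def
  proof (intro ballI impI)
    fix x y assume "x \<in> f ` E" "y \<in> f ` E" "x \<noteq> y"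
    then obtain l m where l: "l \<in> E" "x = f l" and m: "m \<in> E" "y = f m" "l \<noteq> m" by auto
    have "cinner (f l) (f m) = 0" using eig_orth[OF sa] f[OF l(1)] f[OF m(1)] m(3) by blast
    then show "x \<bullet> y = 0" by (simp add: l m inner_cinner)
  qed
  have "0 \<notin> f ` E" using f by auto
  then have "independent (f ` E)" using pairwise_orthogonal_independent[OF po] by blast
  then have "finite (f ` E)" using independent_bound by blast
  then show ?thesis using finite_imageD[OF _ inj] by (simp add: E_def)
qed

lemma eig_nonneg:
  assumes psdW: "psd W" and e: "is_eigenvalue W (of_real l)"
  shows "l \<ge> 0"
proof -
  obtain v where v: "v \<noteq> 0" "W *v v = complex_of_real l *s v" using e by (auto simp: is_eigenvalue_def)
  have "qf W v = of_real l * of_real ((norm v)^2)" by (simp add: qf_def v cinner_scale_right cinner_self)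
  then have "Re (qf W v) = l * (norm v)^2" by simp
  moreover have "0 \<le> Re (qf W v)" using psdW psd_iff by blast
  moreover have "(norm v)^2 > 0" using v by simp
  ultimately show ?thesis by (simp add: zero_le_mult_iff)
qed

lemma min_eig_zero:
  assumes psdW: "psd W" and e: "is_eigenvalue W 0"
  shows "min_eig W = 0"
  unfolding min_eig_def
proof (rule Min_eqI)
  show "finite {l::real. is_eigenvalue W (of_real l)}" by (rule eig_finite[OF psd_self_adjoint[OF psdW]])
  show "\<And>y. y \<in> {l. is_eigenvalue W (complex_of_real l)} \<Longrightarrow> 0 \<le> y"
    using eig_nonneg[OF psdW] by blast
  show "0 \<in> {l. is_eigenvalue W (complex_of_real l)}" using e by simp
qed

lemma norm_le_sum_vec: "norm (x::'a::real_normed_vector^'n::finite) \<le> (\<Sum>i\<in>UNIV. norm (x $ i))"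
  unfolding norm_vec_def by (rule L2_set_le_sum) simp

lemma bl_trace_c: "bounded_linear (\<lambda>A::'n::finite op. trace (X ** A))"
proof -
  have "linear (\<lambda>A::'n op. trace (X ** A))"
  proof (rule linearI)
    fix A B :: "'n op" and r :: real
    show "trace (X ** (A + B)) = trace (X ** A) + trace (X ** B)" by (simp add: matrix_add_ldistrib trace_add)
    have "trace (X ** (r *\<^sub>R A)) = of_real r * trace (X ** A)" by (simp add: mm_scaleR_r trace_scaleR)
    then show "trace (X ** (r *\<^sub>R A)) = r *\<^sub>R trace (X ** A)" by (simp add: scaleR_conv_of_real)
  qed
  then show ?thesis using linear_conv_bounded_linear by blast
qed

lemma closed_psd_set: "closed {z::complex. z \<in> \<real> \<and> 0 \<le> Re z}"
proof -
  have "{z::complex. z \<in> \<real> \<and> 0 \<le> Re z} = {z. Im z = 0} \<inter> {z. 0 \<le> Re z}"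
    by (auto simp: Reals_Im)
  moreover have "closed {z::complex. Im z = 0}"
    by (intro closed_Collect_eq continuous_intros)
  moreover have "closed {z::complex. 0 \<le> Re z}"
    by (intro closed_Collect_le continuous_intros)
  ultimately show ?thesis by auto
qed

context lsys begin

lemma limpt_density:
  assumes s: "filterlim s at_top sequentially" and lim: "(\<lambda>k. \<rho> (s k)) \<longlonglongrightarrow> \<sigma>"
  shows "density_state \<sigma>"
proof -
  have ev: "eventually (\<lambda>k. 0 \<le> s k) sequentially" using s by (simp add: filterlim_at_top)
  have "psd \<sigma>" unfolding psd_iff
  proof
    fix x
    have l: "(\<lambda>k. qf (\<rho> (s k)) x) \<longlonglongrightarrow> qf \<sigma> x"
      using isCont_tendsto_compose[OF isCont_qf tendsto_Pair[OF lim tendsto_const], of x] by simp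
    have "eventually (\<lambda>k. qf (\<rho> (s k)) x \<in> {z::complex. z \<in> \<real> \<and> 0 \<le> Re z}) sequentially"
      using ev by eventually_elim (use psd_rho in \<open>auto simp: psd_iff\<close>)
    from Lim_in_closed_set[OF closed_psd_set this _ l]
    show "qf \<sigma> x \<in> \<real> \<and> 0 \<le> Re (qf \<sigma> x)" by simp
  qed
  moreover have "trace \<sigma> = 1"
  proof -
    have l: "(\<lambda>k. trace (mat 1 ** \<rho> (s k))) \<longlonglongrightarrow> trace (mat 1 ** \<sigma>)"
      by (rule bounded_linear.tendsto[OF bl_trace_c lim])
    have "eventually (\<lambda>k. trace (mat 1 ** \<rho> (s k)) \<in> {1}) sequentially"
      using ev by eventually_elim (simp add: trace1)
    from Lim_in_closed_set[OF closed_singleton this _ l] show ?thesis by simp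
  qed
  ultimately show ?thesis by (simp add: density_state_def)
qed

lemma limpt_trace:
  assumes s: "filterlim s at_top sequentially" and lim: "(\<lambda>k. \<rho> (s k)) \<longlonglongrightarrow> \<sigma>"
    and conv: "((\<lambda>t. trace (W ** \<rho> t)) \<longlongrightarrow> 0) at_top"
  shows "trace (W ** \<sigma>) = 0"
proof -
  have l1: "(\<lambda>k. trace (W ** \<rho> (s k))) \<longlonglongrightarrow> trace (W ** \<sigma>)"
    by (rule bounded_linear.tendsto[OF bl_trace_c lim])
  have l2: "(\<lambda>k. trace (W ** \<rho> (s k))) \<longlonglongrightarrow> 0"
    using filterlim_compose[OF conv s] by (simp add: o_def)
  show ?thesis using tendsto_unique[OF _ l1 l2] by simp
qed

lemma exists_limpt: "\<exists>s \<sigma>. filterlim s at_top sequentially \<and> (\<lambda>k. \<rho> (s k)) \<longlonglongrightarrow> \<sigma>"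
proof -
  have b: "norm (\<rho> t) \<le> of_nat (CARD('n)) * of_nat (CARD('n))" if "t \<ge> 0" for t
  proof -
    have "norm (\<rho> t) \<le> (\<Sum>i\<in>UNIV. norm (\<rho> t $ i))" by (rule norm_le_sum_vec)
    also have "\<dots> \<le> (\<Sum>i\<in>UNIV. \<Sum>j\<in>UNIV. norm (\<rho> t $ i $ j))"
      by (intro sum_mono norm_le_sum_vec)
    also have "\<dots> \<le> (\<Sum>i\<in>(UNIV::'n set). \<Sum>j\<in>(UNIV::'n set). 1)"
      using density_entry[OF density_rho[OF that]] by (intro sum_mono) auto
    finally show ?thesis by simp
  qed
  have "bounded (range (\<lambda>n::nat. \<rho> (real n)))"
    unfolding bounded_iff
    by (intro exI[of _ "of_nat CARD('n) * of_nat CARD('n)"]) (auto intro: b)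
  then obtain l r where r: "strict_mono (r::nat \<Rightarrow> nat)" "((\<lambda>n. \<rho> (real n)) \<circ> r) \<longlonglongrightarrow> l"
    using bounded_imp_convergent_subsequence by blast
  have "filterlim (\<lambda>k. real (r k)) at_top sequentially"
    using filterlim_compose[OF filterlim_real_sequentially filterlim_subseq[OF r(1)]] by (simp add: o_def)
  then show ?thesis using r(2) by (auto simp: o_def)
qed

end

theorem lemma16:
  fixes H :: "'n::finite op" and K :: nat and L :: "nat \<Rightarrow> 'n op"
    and N :: nat and Ws :: "nat \<Rightarrow> 'n op" and \<rho> :: "real \<Rightarrow> 'n op"
  assumes H_sa: "self_adjoint H"
    and W_sa: "\<And>l. l < N \<Longrightarrow> self_adjoint (Ws l)"
    and W_comm: "\<And>l. l < N \<Longrightarrow> Ws l ** H = H ** Ws l"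
    and W_psd: "\<And>l. l < N \<Longrightarrow> psd (Ws l)"
    and W_min: "\<And>l. l < N \<Longrightarrow> min_eig (Ws l) = 0"
    and cond: "(\<forall>l<N. condition_ES K L (Ws l)) \<or> (\<forall>l<N. condition_DS K L (Ws l))"
    and init: "density_state (\<rho> 0)"
    and ode: "\<And>t. t \<ge> 0 \<Longrightarrow>
               (\<rho> has_vector_derivative lindblad H K L (\<rho> t)) (at t within {0..})"
  shows "converges_to_ground_states \<rho> (\<Sum>l<N. Ws l)
         \<and> lyapunov_op K L (\<Sum>l<N. Ws l)"
proof -
  interpret lsys H K L \<rho> using H_sa init ode by unfold_locales
  define W where "W = (\<Sum>l<N. Ws l)"
  have conv_l: "((\<lambda>t. trace (Ws l ** \<rho> t)) \<longlongrightarrow> 0) at_top" if l: "l < N" for l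
  proof (rule tendsto_from_V[OF W_psd[OF l]])
    show "(V (Ws l) \<longlongrightarrow> 0) at_top"
    proof (cases "\<forall>l<N. condition_ES K L (Ws l)")
      case True
      then obtain c where "c > 0" "loewner_le (gen K L (Ws l)) (- (c *\<^sub>R Ws l))"
        using l by (auto simp: condition_ES_def)
      then show ?thesis using ES_conv[OF W_psd[OF l] W_comm[OF l]] by blast
    next
      case False
      then have "condition_DS K L (Ws l)" using cond l by blast
      then obtain c where "c > 0" "loewner_le (gen K L (Ws l)) 0" "loewner_le (c *\<^sub>R Ws l) (dissip K L (Ws l))"
        by (auto simp: condition_DS_def)
      then show ?thesis using DS_conv[OF W_psd[OF l] W_sa[OF l] W_comm[OF l]] by blast
    qed
  qed
  have conv: "((\<lambda>t. trace (W ** \<rho> t)) \<longlongrightarrow> 0) at_top"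
  proof -
    have "((\<lambda>t. \<Sum>l<N. trace (Ws l ** \<rho> t)) \<longlongrightarrow> (\<Sum>l<N. 0)) at_top"
      by (intro tendsto_sum conv_l) simp
    then show ?thesis by (simp add: W_def mult_sum_left trace_sum)
  qed
  have psdW: "psd W" unfolding W_def by (rule psd_sum[OF W_psd])
  have minW: "min_eig W = 0"
  proof -
    obtain s \<sigma> where s: "filterlim s at_top sequentially" "(\<lambda>k. \<rho> (s k)) \<longlonglongrightarrow> \<sigma>"
      using exists_limpt by blast
    have d: "density_state \<sigma>" by (rule limpt_density[OF s])
    have "trace (W ** \<sigma>) = 0" by (rule limpt_trace[OF s conv])
    then have Wz: "W ** \<sigma> = 0" using trace_psd_zero[OF psdW] d by (simp add: density_state_def)
    have "\<sigma> \<noteq> 0" using d by (auto simp: density_state_def trace_def)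
    then obtain j where j: "\<sigma> *v axis j 1 \<noteq> 0"
      by (metis (no_types, lifting) mv_axis vec_eq_iff zero_index)
    have "W *v (\<sigma> *v axis j 1) = 0" by (simp add: matrix_vector_mul_assoc Wz)
    then have "is_eigenvalue W 0" using j unfolding is_eigenvalue_def by (intro exI[of _ "\<sigma> *v axis j 1"]) simp
    then show ?thesis by (rule min_eig_zero[OF psdW])
  qed
  have ground: "converges_to_ground_states \<rho> W"
    unfolding converges_to_ground_states_def limit_point_at_top_def ground_states_def
  proof (intro allI impI, elim exE conjE)
    fix \<sigma> s assume s: "filterlim s at_top sequentially" "(\<lambda>k. \<rho> (s k)) \<longlonglongrightarrow> \<sigma>"
    show "\<sigma> \<in> {\<rho>. density_state \<rho> \<and> trace (W ** \<rho>) = complex_of_real (min_eig W)}"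
      using limpt_density[OF s] limpt_trace[OF s conv] minW by simp
  qed
  have gen_neg: "loewner_le (gen K L W) 0"
  proof -
    have each: "psd (0 - gen K L (Ws l))" if l: "l < N" for l
    proof (cases "\<forall>l<N. condition_ES K L (Ws l)")
      case True
      then obtain c where c: "c > 0" "loewner_le (gen K L (Ws l)) (- (c *\<^sub>R Ws l))"
        using l by (auto simp: condition_ES_def)
      have "psd ((- (c *\<^sub>R Ws l) - gen K L (Ws l)) + c *\<^sub>R Ws l)"
        using c by (intro psd_add psd_scaleR W_psd[OF l]) (auto simp: loewner_le_def)
      then show ?thesis by simp
    next
      case False
      then have "condition_DS K L (Ws l)" using cond l by blast
      then show ?thesis by (simp add: condition_DS_def loewner_le_def)
    qed
    have "0 - gen K L W = (\<Sum>l<N. 0 - gen K L (Ws l))"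
      by (simp add: W_def linear_sum[OF linear_gen] sum_negf)
    then show ?thesis unfolding loewner_le_def using psd_sum[OF each] by simp
  qed
  have "lyapunov_op K L W"
    unfolding lyapunov_op_def
    using self_adjoint_sum[OF W_sa] psdW minW gen_neg by (simp add: W_def)
  with ground show ?thesis by (simp add: W_def)
qed

end
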